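(* Let $G,H,H'$ be graphs with $V(G)=V(H)=V(H')=\{1,\ldots,n\}$ and $E(G)\subseteq E(H)\subseteq E(H')$, and let $A\in\mathcal{S}(G)$ have the strong spectral property with respect to $H$. Then for every $\epsilon>0$ there is a matrix $A'\in\mathcal{S}^{\rm cl}(H')$ such that $\operatorname{spec}(A')=\operatorname{spec}(A)$, $\|A-A'\|<\epsilon$, $A'$ has the strong spectral property with respect to $H'$, and every entry $a'_{ij}$ of $A'$ with $\{i,j\}\in E(H')\setminus E(H)$ is nonzero.
   Context: For a graph $G$ on $\{1,\ldots,n\}$, $\mathcal{S}(G)$ is the set of $n\times n$ real symmetric matrices $A=(a_{ij})$ with, for $i\neq j$, $a_{ij}\neq0$ iff $\{i,j\}\in E(G)$; $\mathcal{S}^{\rm cl}(G)$ is the set of $n\times n$ real symmetric matrices whose $(i,j)$-entry, $i\neq j$, is nonzero only if $\{i,j\}\in E(G)$ (its closure). $\overline{H}$ denotes the complement graph of $H$. If $A\in\mathcal{S}(G)$ and $H$ is a graph on the same vertex set with $E(G)\subseteq E(H)$, then $A$ has the strong spectral property with respect to $H$ if the only real symmetric matrix $X$ with $X\in\mathcal{S}^{\rm cl}(\overline{H})$, $I\circ X=O$ and $AX-XA=O$ is $X=O$ ($\circ$ the entrywise product). $\|\cdot\|$ is any fixed norm on $n\times n$ matrices. *)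

theory Defs
  imports "Jordan_Normal_Form.Jordan_Normal_Form"
begin

(* Graphs on the vertex set {0..<n} (the paper's {1..n}, shifted by one) are
   given by an edge predicate E :: nat => nat => bool; {i,j} is an edge iff E i j. *)
definition graph_on :: "nat \<Rightarrow> (nat \<Rightarrow> nat \<Rightarrow> bool) \<Rightarrow> bool" where
  "graph_on n E \<longleftrightarrow> (\<forall>i j. E i j \<longrightarrow> i < n \<and> j < n \<and> i \<noteq> j \<and> E j i)"

definition edge_subset :: "(nat \<Rightarrow> nat \<Rightarrow> bool) \<Rightarrow> (nat \<Rightarrow> nat \<Rightarrow> bool) \<Rightarrow> bool" where
  "edge_subset E F \<longleftrightarrow> (\<forall>i j. E i j \<longrightarrow> F i j)"

definition compl_graph :: "nat \<Rightarrow> (nat \<Rightarrow> nat \<Rightarrow> bool) \<Rightarrow> nat \<Rightarrow> nat \<Rightarrow> bool" where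
  "compl_graph n E i j \<longleftrightarrow> i < n \<and> j < n \<and> i \<noteq> j \<and> \<not> E i j"

definition sym_mats :: "nat \<Rightarrow> real mat set" where
  "sym_mats n = {A. A \<in> carrier_mat n n \<and> transpose_mat A = A}"

definition S_pattern :: "nat \<Rightarrow> (nat \<Rightarrow> nat \<Rightarrow> bool) \<Rightarrow> real mat set" where
  "S_pattern n E = {A \<in> sym_mats n. \<forall>i<n. \<forall>j<n. i \<noteq> j \<longrightarrow> (A $$ (i,j) \<noteq> 0 \<longleftrightarrow> E i j)}"

definition S_cl :: "nat \<Rightarrow> (nat \<Rightarrow> nat \<Rightarrow> bool) \<Rightarrow> real mat set" where
  "S_cl n E = {A \<in> sym_mats n. \<forall>i<n. \<forall>j<n. i \<noteq> j \<longrightarrow> A $$ (i,j) \<noteq> 0 \<longrightarrow> E i j}"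

definition SSP_wrt :: "nat \<Rightarrow> real mat \<Rightarrow> (nat \<Rightarrow> nat \<Rightarrow> bool) \<Rightarrow> bool" where
  "SSP_wrt n A H \<longleftrightarrow>
     (\<forall>X. X \<in> S_cl n (compl_graph n H) \<and> (\<forall>i<n. X $$ (i,i) = 0) \<and> A * X - X * A = 0\<^sub>m n n
          \<longrightarrow> X = 0\<^sub>m n n)"

(* spectrum with multiplicities: multiplicity of x as a root of the characteristic polynomial *)
definition spec :: "real mat \<Rightarrow> real \<Rightarrow> nat" where
  "spec A = (\<lambda>x. order x (char_poly A))"

definition matrix_norm :: "nat \<Rightarrow> (real mat \<Rightarrow> real) \<Rightarrow> bool" where
  "matrix_norm n N \<longleftrightarrow>
     (\<forall>A \<in> carrier_mat n n. N A \<ge> 0 \<and> (N A = 0 \<longleftrightarrow> A = 0\<^sub>m n n)) \<and>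
     (\<forall>A \<in> carrier_mat n n. \<forall>c. N (c \<cdot>\<^sub>m A) = \<bar>c\<bar> * N A) \<and>
     (\<forall>A \<in> carrier_mat n n. \<forall>B \<in> carrier_mat n n. N (A + B) \<le> N A + N B)"

end

theory Submission
  imports Defs
begin


definition mn :: "real mat \<Rightarrow> real" where
  "mn M = (\<Sum>i<dim_row M. \<Sum>j<dim_col M. \<bar>M $$ (i,j)\<bar>)"

lemma row_col: "M \<in> carrier_mat n n \<Longrightarrow> P \<in> carrier_mat n n \<Longrightarrow> i < n \<Longrightarrow> j < n \<Longrightarrow>
  row M i \<bullet> col P j = (\<Sum>k<n. M $$ (i,k) * P $$ (k,j))"
  by (auto simp: scalar_prod_def lessThan_atLeast0 intro!: sum.cong)

lemma mult_entry: "M \<in> carrier_mat n n \<Longrightarrow> P \<in> carrier_mat n n \<Longrightarrow> i < n \<Longrightarrow> j < n \<Longrightarrow>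
  (M * P) $$ (i,j) = (\<Sum>k<n. M $$ (i,k) * P $$ (k,j))"
  by (simp add: row_col)

lemma mn_nonneg: "mn M \<ge> 0"
  unfolding mn_def by (intro sum_nonneg) auto

lemma mn_entry: "M \<in> carrier_mat n n \<Longrightarrow> i < n \<Longrightarrow> j < n \<Longrightarrow> \<bar>M $$ (i,j)\<bar> \<le> mn M"
proof -
  assume M: "M \<in> carrier_mat n n" and ij: "i < n" "j < n"
  have "\<bar>M $$ (i,j)\<bar> \<le> (\<Sum>j<n. \<bar>M $$ (i,j)\<bar>)"
    using ij by (intro member_le_sum) auto
  also have "\<dots> \<le> (\<Sum>i<n. \<Sum>j<n. \<bar>M $$ (i,j)\<bar>)"
    using ij by (intro member_le_sum[where f="\<lambda>i. \<Sum>j<n. \<bar>M $$ (i,j)\<bar>"]) (auto intro: sum_nonneg)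
  finally show ?thesis using M by (simp add: mn_def)
qed

lemma mn_zero_iff: "M \<in> carrier_mat n n \<Longrightarrow> mn M = 0 \<longleftrightarrow> M = 0\<^sub>m n n"
proof
  assume M: "M \<in> carrier_mat n n" and z: "mn M = 0"
  show "M = 0\<^sub>m n n"
  proof (rule eq_matI)
    fix i j assume "i < dim_row (0\<^sub>m n n)" "j < dim_col (0\<^sub>m n n)"
    then have "\<bar>M $$ (i,j)\<bar> \<le> 0" using mn_entry[OF M, of i j] z by auto
    then show "M $$ (i,j) = 0\<^sub>m n n $$ (i,j)" using \<open>i < _\<close> \<open>j < _\<close> by auto
  qed (use M in auto)
next
  assume "M = 0\<^sub>m n n" then show "mn M = 0" by (simp add: mn_def)
qed

lemma mn_add: "M \<in> carrier_mat n n \<Longrightarrow> P \<in> carrier_mat n n \<Longrightarrow> mn (M + P) \<le> mn M + mn P"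
  unfolding mn_def by (auto simp: sum.distrib[symmetric] intro!: sum_mono abs_triangle_ineq)

lemma mn_minus: "M \<in> carrier_mat n n \<Longrightarrow> P \<in> carrier_mat n n \<Longrightarrow> mn (M - P) \<le> mn M + mn P"
  unfolding mn_def by (auto simp: sum.distrib[symmetric] intro!: sum_mono abs_triangle_ineq4)

lemma abs3: "\<bar>a - c\<bar> \<le> \<bar>a - b\<bar> + \<bar>b - (c::real)\<bar>" by arith

lemma mn_tri: "M \<in> carrier_mat n n \<Longrightarrow> P \<in> carrier_mat n n \<Longrightarrow> Q \<in> carrier_mat n n \<Longrightarrow>
   mn (M - Q) \<le> mn (M - P) + mn (P - Q)"
  unfolding mn_def by (auto simp: sum.distrib[symmetric] intro!: sum_mono abs3)

lemma mn_sym: "M \<in> carrier_mat n n \<Longrightarrow> P \<in> carrier_mat n n \<Longrightarrow> mn (M - P) = mn (P - M)"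
  unfolding mn_def by (auto intro!: sum.cong simp: abs_minus_commute)

lemma mn_smult: "mn (c \<cdot>\<^sub>m M) = \<bar>c\<bar> * mn M"
  unfolding mn_def by (auto simp: sum_distrib_left abs_mult intro!: sum.cong)

lemma mn_uminus: "mn (- M) = mn M"
  unfolding mn_def by (auto intro!: sum.cong)

lemma mn_transpose: "M \<in> carrier_mat n n \<Longrightarrow> mn (transpose_mat M) = mn M"
proof -
  assume M: "M \<in> carrier_mat n n"
  have "mn (transpose_mat M) = (\<Sum>i<n. \<Sum>j<n. \<bar>M $$ (j,i)\<bar>)"
    using M by (auto simp: mn_def intro!: sum.cong)
  also have "\<dots> = (\<Sum>j<n. \<Sum>i<n. \<bar>M $$ (j,i)\<bar>)" by (rule sum.swap)
  finally show ?thesis using M by (simp add: mn_def)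
qed

lemma swap_helper: "(\<Sum>j<n. \<Sum>k<n. (f k::real) * g k j) = (\<Sum>k<n. f k * (\<Sum>j<n. g k j))"
proof -
  have "(\<Sum>j<n. \<Sum>k<n. (f k::real) * g k j) = (\<Sum>k<n. \<Sum>j<n. f k * g k j)"
    by (rule sum.swap)
  then show ?thesis by (simp add: sum_distrib_left)
qed

lemma mn_mult: "M \<in> carrier_mat n n \<Longrightarrow> P \<in> carrier_mat n n \<Longrightarrow> mn (M * P) \<le> mn M * mn P"
proof -
  assume M: "M \<in> carrier_mat n n" and P: "P \<in> carrier_mat n n"
  have "mn (M * P) = (\<Sum>i<n. \<Sum>j<n. \<bar>\<Sum>k<n. M $$ (i,k) * P $$ (k,j)\<bar>)"
    using M P by (auto simp: mn_def row_col intro!: sum.cong)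
  also have "\<dots> \<le> (\<Sum>i<n. \<Sum>j<n. \<Sum>k<n. \<bar>M $$ (i,k)\<bar> * \<bar>P $$ (k,j)\<bar>)"
    by (intro sum_mono) (auto simp: abs_mult[symmetric] intro: sum_abs[THEN order_trans])
  also have "\<dots> = (\<Sum>i<n. \<Sum>k<n. \<bar>M $$ (i,k)\<bar> * (\<Sum>j<n. \<bar>P $$ (k,j)\<bar>))"
  proof (rule sum.cong[OF refl])
    fix i assume "i \<in> {..<n}"
    show "(\<Sum>j<n. \<Sum>k<n. \<bar>M $$ (i,k)\<bar> * \<bar>P $$ (k,j)\<bar>) = (\<Sum>k<n. \<bar>M $$ (i,k)\<bar> * (\<Sum>j<n. \<bar>P $$ (k,j)\<bar>))"
      by (rule swap_helper)
  qed
  also have "\<dots> \<le> (\<Sum>i<n. \<Sum>k<n. \<bar>M $$ (i,k)\<bar> * mn P)"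
  proof (intro sum_mono mult_left_mono)
    fix k assume "k \<in> {..<n}"
    then have "(\<Sum>j<n. \<bar>P $$ (k,j)\<bar>) \<le> (\<Sum>k<n. \<Sum>j<n. \<bar>P $$ (k,j)\<bar>)"
      by (intro member_le_sum[where f="\<lambda>k. \<Sum>j<n. \<bar>P $$ (k,j)\<bar>"]) (auto intro: sum_nonneg)
    then show "(\<Sum>j<n. \<bar>P $$ (k,j)\<bar>) \<le> mn P" using P by (simp add: mn_def)
  qed auto
  also have "\<dots> = mn M * mn P"
    using M by (simp add: mn_def sum_distrib_right)
  finally show ?thesis .
qed



lemma mn_eq0: "M \<in> carrier_mat n n \<Longrightarrow> P \<in> carrier_mat n n \<Longrightarrow> mn (M - P) \<le> 0 \<Longrightarrow> M = P"
proof -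
  assume M: "M \<in> carrier_mat n n" and P: "P \<in> carrier_mat n n" and z: "mn (M - P) \<le> 0"
  show "M = P"
  proof (rule eq_matI)
    fix i j assume ij: "i < dim_row P" "j < dim_col P"
    have "\<bar>(M - P) $$ (i,j)\<bar> \<le> mn (M - P)" using M P ij by (intro mn_entry[of _ n]) auto
    then show "M $$ (i,j) = P $$ (i,j)" using z M P ij by auto
  qed (use M P in auto)
qed

lemma mn_le_diff: "M \<in> carrier_mat n n \<Longrightarrow> P \<in> carrier_mat n n \<Longrightarrow> mn P \<le> mn (M - P) + mn M"
  unfolding mn_def by (auto simp: sum.distrib[symmetric] intro!: sum_mono)

lemma contraction_fix:
  fixes T :: "real mat \<Rightarrow> real mat" and r :: real
  assumes r: "r \<ge> 0"
    and maps: "\<And>Z. Z \<in> carrier_mat n n \<Longrightarrow> mn Z \<le> r \<Longrightarrow> T Z \<in> carrier_mat n n \<and> mn (T Z) \<le> r"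
    and contr: "\<And>Z W. Z \<in> carrier_mat n n \<Longrightarrow> mn Z \<le> r \<Longrightarrow> W \<in> carrier_mat n n \<Longrightarrow> mn W \<le> r
        \<Longrightarrow> mn (T Z - T W) \<le> 1/2 * mn (Z - W)"
  shows "\<exists>Z \<in> carrier_mat n n. mn Z \<le> r \<and> T Z = Z"
proof -
  define z where "z k = (T ^^ k) (0\<^sub>m n n)" for k
  have zin: "z k \<in> carrier_mat n n \<and> mn (z k) \<le> r" for k
  proof (induct k)
    case 0 then show ?case using r by (simp add: z_def mn_def)
  next
    case (Suc k) then show ?case using maps[of "z k"] by (simp add: z_def)
  qed
  define D where "D = mn (z 1 - z 0)"
  have step: "mn (z (Suc k) - z k) \<le> (1/2)^k * D" for k
  proof (induct k)
    case 0 then show ?case by (simp add: D_def)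
  next
    case (Suc k)
    have "mn (z (Suc (Suc k)) - z (Suc k)) = mn (T (z (Suc k)) - T (z k))" by (simp add: z_def)
    also have "\<dots> \<le> 1/2 * mn (z (Suc k) - z k)" using zin[of k] zin[of "Suc k"] by (intro contr) auto
    also have "\<dots> \<le> 1/2 * ((1/2)^k * D)" using Suc by simp
    finally show ?case by simp
  qed
  have conv: "convergent (\<lambda>k. z k $$ (i,j))" if ij: "i < n" "j < n" for i j
  proof -
    let ?f = "\<lambda>k. z k $$ (i,j)"
    have "summable (\<lambda>k. ?f (Suc k) - ?f k)"
    proof (rule summable_comparison_test'[where g="\<lambda>k. (1/2)^k * D"])
      show "summable (\<lambda>k. (1/2::real)^k * D)" by (intro summable_mult2 summable_geometric) simp
      fix k
      have "norm (?f (Suc k) - ?f k) = \<bar>(z (Suc k) - z k) $$ (i,j)\<bar>" using zin[of k] zin[of "Suc k"] ij by auto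
      also have "\<dots> \<le> mn (z (Suc k) - z k)" using zin[of k] zin[of "Suc k"] ij by (intro mn_entry[of _ n]) auto
      also have "\<dots> \<le> (1/2)^k * D" by (rule step)
      finally show "norm (?f (Suc k) - ?f k) \<le> (1/2)^k * D" .
    qed
    then have "convergent (\<lambda>k. \<Sum>m<k. ?f (Suc m) - ?f m)" by (simp add: summable_iff_convergent)
    then have "convergent (\<lambda>k. ?f k - ?f 0)" by (simp only: sum_lessThan_telescope[of ?f])
    then have "convergent (\<lambda>k. (?f k - ?f 0) + ?f 0)" by (intro convergent_add convergent_const)
    then show ?thesis by simp
  qed
  define L where "L = mat n n (\<lambda>(i,j). lim (\<lambda>k. z k $$ (i,j)))"
  have Lc: "L \<in> carrier_mat n n" by (simp add: L_def)
  have lim: "(\<lambda>k. z k $$ (i,j)) \<longlonglongrightarrow> L $$ (i,j)" if "i < n" "j < n" for i j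
    using conv[OF that] that by (simp add: L_def convergent_LIMSEQ_iff)
  have mnlim: "(\<lambda>k. mn (z k - L)) \<longlonglongrightarrow> 0"
  proof -
    have e: "mn (z k - L) = (\<Sum>i<n. \<Sum>j<n. \<bar>z k $$ (i,j) - L $$ (i,j)\<bar>)" for k
      using zin[of k] Lc by (auto simp: mn_def intro!: sum.cong)
    have "(\<lambda>k. \<Sum>i<n. \<Sum>j<n. \<bar>z k $$ (i,j) - L $$ (i,j)\<bar>) \<longlonglongrightarrow> (\<Sum>i<n. \<Sum>j<n. \<bar>L $$ (i,j) - L $$ (i,j)\<bar>)"
      by (intro tendsto_sum tendsto_rabs tendsto_diff lim tendsto_const) auto
    then show ?thesis unfolding e by simp
  qed
  have mnL: "mn L \<le> r"
  proof (rule tendsto_le[OF trivial_limit_sequentially])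
    show "(\<lambda>k. mn (z k - L) + r) \<longlonglongrightarrow> r" using tendsto_add[OF mnlim tendsto_const[of r]] by simp
    show "(\<lambda>k. mn L) \<longlonglongrightarrow> mn L" by simp
    show "\<forall>\<^sub>F k in sequentially. mn L \<le> mn (z k - L) + r"
    proof (rule always_eventually, rule allI)
      fix k show "mn L \<le> mn (z k - L) + r" using zin[of k] Lc mn_le_diff[of "z k" n L] by linarith
    qed
  qed
  have TL: "T L \<in> carrier_mat n n" using maps[OF Lc mnL] by simp
  have "mn (T L - L) \<le> 0"
  proof (rule tendsto_le[OF trivial_limit_sequentially])
    show "(\<lambda>k. 1/2 * mn (z k - L) + mn (z (Suc k) - L)) \<longlonglongrightarrow> 0"
      using tendsto_add[OF tendsto_mult[OF tendsto_const[of "1/2"] mnlim] LIMSEQ_Suc[OF mnlim]] by simp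
    show "(\<lambda>k. mn (T L - L)) \<longlonglongrightarrow> mn (T L - L)" by simp
    show "\<forall>\<^sub>F k in sequentially. mn (T L - L) \<le> 1/2 * mn (z k - L) + mn (z (Suc k) - L)"
    proof (rule always_eventually, rule allI)
      fix k
      have zk: "z k \<in> carrier_mat n n" "mn (z k) \<le> r" using zin by auto
      have zs: "z (Suc k) = T (z k)" by (simp add: z_def)
      have "mn (T L - L) \<le> mn (T L - z (Suc k)) + mn (z (Suc k) - L)"
        using TL Lc zin[of "Suc k"] by (intro mn_tri) auto
      also have "mn (T L - z (Suc k)) \<le> 1/2 * mn (L - z k)"
        unfolding zs using contr[OF Lc mnL zk] .
      also have "mn (L - z k) = mn (z k - L)" using Lc zk by (intro mn_sym) auto
      finally show "mn (T L - L) \<le> 1/2 * mn (z k - L) + mn (z (Suc k) - L)" by simp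
    qed
  qed
  then have "T L = L" using TL Lc by (intro mn_eq0) auto
  then show ?thesis using Lc mnL by blast
qed



definition unitm :: "nat \<Rightarrow> nat \<Rightarrow> nat \<Rightarrow> real mat" where
  "unitm n a b = mat n n (\<lambda>(i,j). if i = a \<and> j = b then 1 else 0)"

definition part :: "nat \<Rightarrow> nat \<Rightarrow> real mat \<Rightarrow> real mat" where
  "part n k X = mat n n (\<lambda>(i,j). if i*n+j < k then X $$ (i,j) else 0)"

lemma unitm_carrier[simp]: "unitm n a b \<in> carrier_mat n n" by (simp add: unitm_def)
lemma part_carrier[simp]: "part n k X \<in> carrier_mat n n" by (simp add: part_def)
lemma unitm_dim[simp]: "dim_row (unitm n a b) = n" "dim_col (unitm n a b) = n" by (auto simp: unitm_def)
lemma part_dim[simp]: "dim_row (part n k X) = n" "dim_col (part n k X) = n" by (auto simp: part_def)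

lemma idx_eq: "j < (n::nat) \<Longrightarrow> (i*n + j = k) \<longleftrightarrow> (i = k div n \<and> j = k mod n)"
proof
  assume j: "j < n" and k: "i*n + j = k"
  then show "i = k div n \<and> j = k mod n" by (metis add.commute div_mult_self3 div_less mod_mult_self3 mod_less not_less0 add_0)
next
  assume "i = k div n \<and> j = k mod n"
  then show "i*n + j = k" by simp
qed

lemma idx_lt: "i < (n::nat) \<Longrightarrow> j < n \<Longrightarrow> i*n + j < n*n"
proof -
  assume i: "i < n" and j: "j < n"
  have "i*n + j < i*n + n" using j by simp
  also have "\<dots> = Suc i * n" by simp
  also have "\<dots> \<le> n * n" using i by (intro mult_le_mono1) simp
  finally show ?thesis .
qed

lemma part_Suc: "X \<in> carrier_mat n n \<Longrightarrow>
  part n (Suc k) X = part n k X + X $$ (k div n, k mod n) \<cdot>\<^sub>m unitm n (k div n) (k mod n)"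
proof (rule eq_matI)
  fix i j assume X: "X \<in> carrier_mat n n" and ij: "i < dim_row (part n k X + X $$ (k div n, k mod n) \<cdot>\<^sub>m unitm n (k div n) (k mod n))"
     "j < dim_col (part n k X + X $$ (k div n, k mod n) \<cdot>\<^sub>m unitm n (k div n) (k mod n))"
  then have i: "i < n" and j: "j < n" by auto
  have e: "(i*n + j = k) \<longleftrightarrow> (i = k div n \<and> j = k mod n)" using idx_eq[OF j] .
  show "part n (Suc k) X $$ (i,j) = (part n k X + X $$ (k div n, k mod n) \<cdot>\<^sub>m unitm n (k div n) (k mod n)) $$ (i,j)"
    using i j e by (auto simp: part_def unitm_def)
qed auto

lemma part_0: "part n 0 X = 0\<^sub>m n n"
  by (rule eq_matI) (auto simp: part_def)

lemma part_full: "X \<in> carrier_mat n n \<Longrightarrow> part n (n*n) X = X"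
  by (rule eq_matI) (auto simp: part_def idx_lt)

lemma seminorm_bound:
  fixes g :: "real mat \<Rightarrow> real"
  assumes gadd: "\<And>X Y. X \<in> carrier_mat n n \<Longrightarrow> Y \<in> carrier_mat n n \<Longrightarrow> g (X + Y) \<le> g X + g Y"
    and gsm: "\<And>c X. X \<in> carrier_mat n n \<Longrightarrow> g (c \<cdot>\<^sub>m X) = \<bar>c\<bar> * g X"
  shows "\<exists>C\<ge>0. \<forall>X\<in>carrier_mat n n. g X \<le> C * mn X"
proof -
  have g0: "g (0\<^sub>m n n) = 0" using gsm[of "0\<^sub>m n n" 0] by simp
  have gnn: "g X \<ge> 0" if X: "X \<in> carrier_mat n n" for X
  proof -
    have "X + (-1) \<cdot>\<^sub>m X = 0\<^sub>m n n" using X by (intro eq_matI) auto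
    then have "0 \<le> g X + g ((-1) \<cdot>\<^sub>m X)" using gadd[of X "(-1) \<cdot>\<^sub>m X"] X g0 by auto
    then show ?thesis using gsm[OF X, of "-1"] by simp
  qed
  define C where "C = (\<Sum>b<n*n. g (unitm n (b div n) (b mod n)))"
  have C0: "C \<ge> 0" unfolding C_def by (intro sum_nonneg gnn) simp
  have ind: "g (part n k X) \<le> (\<Sum>b<k. \<bar>X $$ (b div n, b mod n)\<bar> * g (unitm n (b div n) (b mod n)))"
    if X: "X \<in> carrier_mat n n" for X k
  proof (induct k)
    case 0 then show ?case by (simp add: part_0 g0)
  next
    case (Suc k)
    have "g (part n (Suc k) X) \<le> g (part n k X) + g (X $$ (k div n, k mod n) \<cdot>\<^sub>m unitm n (k div n) (k mod n))"
      unfolding part_Suc[OF X] by (intro gadd) auto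
    also have "\<dots> = g (part n k X) + \<bar>X $$ (k div n, k mod n)\<bar> * g (unitm n (k div n) (k mod n))"
      by (simp add: gsm)
    finally show ?case using Suc by simp
  qed
  have "g X \<le> C * mn X" if X: "X \<in> carrier_mat n n" for X
  proof -
    have "g X = g (part n (n*n) X)" using part_full[OF X] by simp
    also have "\<dots> \<le> (\<Sum>b<n*n. \<bar>X $$ (b div n, b mod n)\<bar> * g (unitm n (b div n) (b mod n)))" by (rule ind[OF X])
    also have "\<dots> \<le> (\<Sum>b<n*n. mn X * g (unitm n (b div n) (b mod n)))"
    proof (rule sum_mono, rule mult_right_mono)
      fix b assume "b \<in> {..<n*n}"
      then have "b div n < n" "b mod n < n" by (auto simp: less_mult_imp_div_less) (metis mod_less_divisor mult_0_right neq0_conv not_less0)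
      then show "\<bar>X $$ (b div n, b mod n)\<bar> \<le> mn X" using X by (intro mn_entry) auto
      show "0 \<le> g (unitm n (b div n) (b mod n))" by (intro gnn) simp
    qed
    also have "\<dots> = C * mn X" by (simp add: C_def sum_distrib_left mult.commute)
    finally show ?thesis .
  qed
  then show ?thesis using C0 by blast
qed



definition vm :: "nat \<Rightarrow> real mat \<Rightarrow> real vec" where
  "vm n X = vec (n*n) (\<lambda>b. X $$ (b div n, b mod n))"
definition um :: "nat \<Rightarrow> real vec \<Rightarrow> real mat" where
  "um n v = mat n n (\<lambda>(i,j). v $ (i*n+j))"

lemma divmod_lt: "b < n*n \<Longrightarrow> b div n < n \<and> b mod (n::nat) < n"
  by (auto simp: less_mult_imp_div_less) (metis mod_less_divisor mult_0_right neq0_conv not_less0)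

lemma um_vm: "X \<in> carrier_mat n n \<Longrightarrow> um n (vm n X) = X"
proof (rule eq_matI)
  fix i j assume X: "X \<in> carrier_mat n n" and "i < dim_row X" "j < dim_col X"
  then have ij: "i < n" "j < n" by auto
  have "(i*n + j) div n = i \<and> (i*n+j) mod n = j" using idx_eq[OF ij(2), of i "i*n+j"] by simp
  then show "um n (vm n X) $$ (i, j) = X $$ (i, j)" using ij idx_lt[OF ij] by (simp add: um_def vm_def)
qed (auto simp: um_def)

lemma vm_um: "v \<in> carrier_vec (n*n) \<Longrightarrow> vm n (um n v) = v"
proof (rule eq_vecI)
  fix b assume v: "v \<in> carrier_vec (n*n)" and "b < dim_vec v"
  then have b: "b < n*n" by auto
  then show "vm n (um n v) $ b = v $ b" using divmod_lt[OF b] by (simp add: um_def vm_def)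
qed (auto simp: vm_def)

lemma vm_carrier[simp]: "vm n X \<in> carrier_vec (n*n)" by (simp add: vm_def)
lemma um_carrier[simp]: "um n v \<in> carrier_mat n n" by (simp add: um_def)

lemma linear_surj:
  fixes L :: "real mat \<Rightarrow> real mat"
  assumes Lc: "\<And>X. X \<in> carrier_mat n n \<Longrightarrow> L X \<in> carrier_mat n n"
    and Ladd: "\<And>X Y. X \<in> carrier_mat n n \<Longrightarrow> Y \<in> carrier_mat n n \<Longrightarrow> L (X + Y) = L X + L Y"
    and Lsm: "\<And>c X. X \<in> carrier_mat n n \<Longrightarrow> L (c \<cdot>\<^sub>m X) = c \<cdot>\<^sub>m L X"
    and Linj: "\<And>X. X \<in> carrier_mat n n \<Longrightarrow> L X = 0\<^sub>m n n \<Longrightarrow> X = 0\<^sub>m n n"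
    and Y: "Y \<in> carrier_mat n n"
  shows "\<exists>X\<in>carrier_mat n n. L X = Y"
proof -
  have z: "0 \<cdot>\<^sub>m 0\<^sub>m n n = (0\<^sub>m n n :: real mat)" by (intro eq_matI) auto
  have L0: "L (0\<^sub>m n n) = 0\<^sub>m n n"
  proof -
    have "L (0\<^sub>m n n) = L (0 \<cdot>\<^sub>m 0\<^sub>m n n)" using z by simp
    also have "\<dots> = 0 \<cdot>\<^sub>m L (0\<^sub>m n n)" by (intro Lsm) simp
    also have "\<dots> = 0\<^sub>m n n" using Lc[of "0\<^sub>m n n"] by (intro eq_matI) auto
    finally show ?thesis .
  qed
  have ent: "(L (part n k X)) $$ (i,j) = (\<Sum>b<k. X $$ (b div n, b mod n) * (L (unitm n (b div n) (b mod n))) $$ (i,j))"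
    if X: "X \<in> carrier_mat n n" and ij: "i < n" "j < n" for X k i j
  proof (induct k)
    case 0 then show ?case using ij by (simp add: part_0 L0)
  next
    case (Suc k)
    have "L (part n (Suc k) X) = L (part n k X) + X $$ (k div n, k mod n) \<cdot>\<^sub>m L (unitm n (k div n) (k mod n))"
      unfolding part_Suc[OF X] by (simp add: Ladd Lsm)
    then show ?case using Suc ij Lc[of "part n k X"] Lc[of "unitm n (k div n) (k mod n)"] by simp
  qed
  define M where "M = mat (n*n) (n*n) (\<lambda>(a,b). (L (unitm n (b div n) (b mod n))) $$ (a div n, a mod n))"
  have Mc: "M \<in> carrier_mat (n*n) (n*n)" by (simp add: M_def)
  have Mv: "M *\<^sub>v vm n X = vm n (L X)" if X: "X \<in> carrier_mat n n" for X
  proof (rule eq_vecI)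
    fix a assume "a < dim_vec (vm n (L X))"
    then have a: "a < n*n" by (simp add: vm_def)
    note dm = divmod_lt[OF a]
    have "(M *\<^sub>v vm n X) $ a = (\<Sum>b<n*n. M $$ (a,b) * vm n X $ b)"
      using a Mc by (auto simp: scalar_prod_def lessThan_atLeast0 vm_def)
    also have "\<dots> = (\<Sum>b<n*n. X $$ (b div n, b mod n) * (L (unitm n (b div n) (b mod n))) $$ (a div n, a mod n))"
      using a by (auto simp: M_def vm_def intro!: sum.cong)
    also have "\<dots> = (L (part n (n*n) X)) $$ (a div n, a mod n)" using ent[OF X dm[THEN conjunct1] dm[THEN conjunct2]] by simp
    also have "\<dots> = vm n (L X) $ a" using part_full[OF X] a by (simp add: vm_def)
    finally show "(M *\<^sub>v vm n X) $ a = vm n (L X) $ a" .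
  qed (simp add: M_def vm_def)
  have "det M \<noteq> 0"
  proof
    assume d: "det M = 0"
    have "\<exists>v. v \<in> carrier_vec (n*n) \<and> v \<noteq> 0\<^sub>v (n*n) \<and> M *\<^sub>v v = 0\<^sub>v (n*n)"
      using det_0_iff_vec_prod_zero_field[OF Mc] d by simp
    then obtain v where v1: "v \<in> carrier_vec (n*n)" and v2: "v \<noteq> 0\<^sub>v (n*n)" and v3: "M *\<^sub>v v = 0\<^sub>v (n*n)"
      by blast
    define X where "X = um n v"
    have Xc: "X \<in> carrier_mat n n" by (simp add: X_def)
    have e1: "M *\<^sub>v vm n X = vm n (L X)" by (rule Mv[OF Xc])
    have e2: "vm n X = v" unfolding X_def by (rule vm_um[OF v1])
    have e3: "vm n (L X) = 0\<^sub>v (n*n)" using e1 v3 unfolding e2 by simp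
    have e4: "L X = um n (vm n (L X))" by (rule um_vm[OF Lc[OF Xc], symmetric])
    have e5: "um n (0\<^sub>v (n*n)) = 0\<^sub>m n n" by (intro eq_matI) (auto simp: um_def idx_lt)
    have "L X = 0\<^sub>m n n" using e4 unfolding e3 e5 .
    then have "X = 0\<^sub>m n n" by (rule Linj[OF Xc])
    then have "v = vm n (0\<^sub>m n n)" using e2 by simp
    also have "\<dots> = 0\<^sub>v (n*n)" by (intro eq_vecI) (auto simp: vm_def divmod_lt)
    finally show False using v2 by simp
  qed
  from det_non_zero_imp_unit[OF Mc this, of undefined]
  obtain B where B: "B \<in> carrier_mat (n*n) (n*n)" "M * B = 1\<^sub>m (n*n)"
    unfolding Units_def ring_mat_simps by auto
  define X where "X = um n (B *\<^sub>v vm n Y)"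
  have Xc: "X \<in> carrier_mat n n" by (simp add: X_def)
  have "vm n X = B *\<^sub>v vm n Y" unfolding X_def using B by (intro vm_um) auto
  then have "vm n (L X) = M *\<^sub>v (B *\<^sub>v vm n Y)" using Mv[OF Xc] by simp
  also have "\<dots> = (M * B) *\<^sub>v vm n Y" by (rule assoc_mult_mat_vec[OF Mc B(1), symmetric]) simp
  also have "\<dots> = vm n Y" using B by simp
  finally have "um n (vm n (L X)) = um n (vm n Y)" by simp
  then have "L X = Y" using um_vm[OF Lc[OF Xc]] um_vm[OF Y] by simp
  then show ?thesis using Xc by blast
qed



declare minus_carrier_mat[simp] uminus_carrier_mat[simp]

lemma mat_minus_as_add: "X \<in> carrier_mat n n \<Longrightarrow> Y \<in> carrier_mat n n \<Longrightarrow> X - Y = X + (-1::real) \<cdot>\<^sub>m Y"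
  by (intro eq_matI) auto

lemma linear_inverse:
  fixes L :: "real mat \<Rightarrow> real mat"
  assumes Lc: "\<And>X. X \<in> carrier_mat n n \<Longrightarrow> L X \<in> carrier_mat n n"
    and Ladd: "\<And>X Y. X \<in> carrier_mat n n \<Longrightarrow> Y \<in> carrier_mat n n \<Longrightarrow> L (X + Y) = L X + L Y"
    and Lsm: "\<And>c X. X \<in> carrier_mat n n \<Longrightarrow> L (c \<cdot>\<^sub>m X) = c \<cdot>\<^sub>m L X"
    and Linj: "\<And>X. X \<in> carrier_mat n n \<Longrightarrow> L X = 0\<^sub>m n n \<Longrightarrow> X = 0\<^sub>m n n"
  shows "\<exists>\<Psi> c. c \<ge> 0 \<and> (\<forall>Y\<in>carrier_mat n n. \<Psi> Y \<in> carrier_mat n n \<and> L (\<Psi> Y) = Y)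
     \<and> (\<forall>X\<in>carrier_mat n n. \<Psi> (L X) = X)
     \<and> (\<forall>Y1\<in>carrier_mat n n. \<forall>Y2\<in>carrier_mat n n. \<Psi> (Y1 - Y2) = \<Psi> Y1 - \<Psi> Y2)
     \<and> (\<forall>Y\<in>carrier_mat n n. mn (\<Psi> Y) \<le> c * mn Y)"
proof -
  have Lminus: "L (X - Y) = L X - L Y" if "X \<in> carrier_mat n n" "Y \<in> carrier_mat n n" for X Y
  proof -
    have "L (X - Y) = L (X + (-1) \<cdot>\<^sub>m Y)" using that by (simp only: mat_minus_as_add)
    also have "\<dots> = L X + L ((-1) \<cdot>\<^sub>m Y)" using that by (intro Ladd) auto
    also have "\<dots> = L X + (-1) \<cdot>\<^sub>m L Y" using that by (simp only: Lsm)
    also have "\<dots> = L X - L Y" using Lc[OF that(1)] Lc[OF that(2)] by (simp only: mat_minus_as_add)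
    finally show ?thesis .
  qed
  have Leq: "X = Y" if X: "X \<in> carrier_mat n n" and Y: "Y \<in> carrier_mat n n" and e: "L X = L Y" for X Y
  proof -
    have "L (X - Y) = 0\<^sub>m n n" using Lminus[OF X Y] e Lc[OF Y] by (intro eq_matI) auto
    then have "X - Y = 0\<^sub>m n n" using Linj[of "X - Y"] X Y by auto
    then show ?thesis using X Y by (intro mn_eq0[OF X Y]) (simp add: mn_def)
  qed
  define \<Psi> where "\<Psi> Y = (SOME X. X \<in> carrier_mat n n \<and> L X = Y)" for Y
  have \<Psi>: "\<Psi> Y \<in> carrier_mat n n \<and> L (\<Psi> Y) = Y" if "Y \<in> carrier_mat n n" for Y
  proof -
    have "\<exists>X. X \<in> carrier_mat n n \<and> L X = Y"
      using linear_surj[of n L Y] Lc Ladd Lsm Linj that by blast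
    then show ?thesis unfolding \<Psi>_def by (rule someI_ex)
  qed
  have \<Psi>L: "\<Psi> (L X) = X" if X: "X \<in> carrier_mat n n" for X
    using Leq[of "\<Psi> (L X)" X] \<Psi>[OF Lc[OF X]] X by auto
  have \<Psi>minus: "\<Psi> (Y1 - Y2) = \<Psi> Y1 - \<Psi> Y2" if Y: "Y1 \<in> carrier_mat n n" "Y2 \<in> carrier_mat n n" for Y1 Y2
  proof (rule Leq)
    show "\<Psi> (Y1 - Y2) \<in> carrier_mat n n" using \<Psi>[of "Y1 - Y2"] Y by auto
    show "\<Psi> Y1 - \<Psi> Y2 \<in> carrier_mat n n" using \<Psi> Y by auto
    show "L (\<Psi> (Y1 - Y2)) = L (\<Psi> Y1 - \<Psi> Y2)" using \<Psi>[of "Y1 - Y2"] \<Psi>[OF Y(1)] \<Psi>[OF Y(2)] Y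
      by (simp add: Lminus)
  qed
  have \<Psi>add: "\<Psi> (Y1 + Y2) = \<Psi> Y1 + \<Psi> Y2" if Y: "Y1 \<in> carrier_mat n n" "Y2 \<in> carrier_mat n n" for Y1 Y2
  proof (rule Leq)
    show "\<Psi> (Y1 + Y2) \<in> carrier_mat n n" using \<Psi>[of "Y1 + Y2"] Y by auto
    show "\<Psi> Y1 + \<Psi> Y2 \<in> carrier_mat n n" using \<Psi> Y by auto
    show "L (\<Psi> (Y1 + Y2)) = L (\<Psi> Y1 + \<Psi> Y2)" using \<Psi>[of "Y1 + Y2"] \<Psi>[OF Y(1)] \<Psi>[OF Y(2)] Y
      by (simp add: Ladd)
  qed
  have \<Psi>sm: "\<Psi> (c \<cdot>\<^sub>m Y) = c \<cdot>\<^sub>m \<Psi> Y" if Y: "Y \<in> carrier_mat n n" for c Y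
  proof (rule Leq)
    show "\<Psi> (c \<cdot>\<^sub>m Y) \<in> carrier_mat n n" using \<Psi>[of "c \<cdot>\<^sub>m Y"] Y by auto
    show "c \<cdot>\<^sub>m \<Psi> Y \<in> carrier_mat n n" using \<Psi> Y by auto
    show "L (\<Psi> (c \<cdot>\<^sub>m Y)) = L (c \<cdot>\<^sub>m \<Psi> Y)" using \<Psi>[of "c \<cdot>\<^sub>m Y"] \<Psi>[OF Y] Y
      by (simp add: Lsm)
  qed
  obtain c where c: "c \<ge> 0" "\<forall>Y\<in>carrier_mat n n. mn (\<Psi> Y) \<le> c * mn Y"
  proof -
    have "\<exists>C\<ge>0. \<forall>X\<in>carrier_mat n n. mn (\<Psi> X) \<le> C * mn X"
    proof (rule seminorm_bound)
      fix X Y :: "real mat" assume "X \<in> carrier_mat n n" "Y \<in> carrier_mat n n"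
      then show "mn (\<Psi> (X + Y)) \<le> mn (\<Psi> X) + mn (\<Psi> Y)" using \<Psi>[of X] \<Psi>[of Y] mn_add[of "\<Psi> X" n "\<Psi> Y"] by (simp add: \<Psi>add)
    next
      fix c and X :: "real mat" assume "X \<in> carrier_mat n n"
      then show "mn (\<Psi> (c \<cdot>\<^sub>m X)) = \<bar>c\<bar> * mn (\<Psi> X)" by (simp add: \<Psi>sm mn_smult)
    qed
    then show ?thesis using that by blast
  qed
  show ?thesis
    by (rule exI[of _ \<Psi>], rule exI[of _ c]) (use c \<Psi> \<Psi>L \<Psi>minus in auto)
qed



definition Pr :: "nat \<Rightarrow> (nat \<Rightarrow> nat \<Rightarrow> bool) \<Rightarrow> real mat \<Rightarrow> real mat" where
  "Pr n H M = mat n n (\<lambda>(i,j). if i \<noteq> j \<and> \<not> H i j then M $$ (i,j) else 0)"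
definition cm :: "real mat \<Rightarrow> real mat \<Rightarrow> real mat" where
  "cm P Q = P * Q - Q * P"
definition sg :: "nat \<Rightarrow> (nat \<Rightarrow> nat \<Rightarrow> bool) \<Rightarrow> real mat \<Rightarrow> real mat" where
  "sg n H X = mat n n (\<lambda>(i,j). if i \<noteq> j \<and> \<not> H i j then (X $$ (i,j) + X $$ (j,i)) / 2 else 0)"
definition Phi :: "nat \<Rightarrow> (nat \<Rightarrow> nat \<Rightarrow> bool) \<Rightarrow> real mat \<Rightarrow> real mat \<Rightarrow> real mat" where
  "Phi n H A X = Pr n H (cm (cm A X) A)"
definition Phi' :: "nat \<Rightarrow> (nat \<Rightarrow> nat \<Rightarrow> bool) \<Rightarrow> real mat \<Rightarrow> real mat \<Rightarrow> real mat" where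
  "Phi' n H A X = Phi n H A (sg n H X) + (X - sg n H X)"
definition ip :: "nat \<Rightarrow> real mat \<Rightarrow> real mat \<Rightarrow> real" where
  "ip n M P = (\<Sum>i<n. \<Sum>j<n. M $$ (i,j) * P $$ (i,j))"
definition symG :: "(nat \<Rightarrow> nat \<Rightarrow> bool) \<Rightarrow> bool" where
  "symG H \<longleftrightarrow> (\<forall>i j. H i j \<longrightarrow> H j i)"

lemma Pr_carrier[simp]: "Pr n H M \<in> carrier_mat n n" by (simp add: Pr_def)
lemma Pr_dim[simp]: "dim_row (Pr n H M) = n" "dim_col (Pr n H M) = n" by (auto simp: Pr_def)
lemma Pr_index: "i < n \<Longrightarrow> j < n \<Longrightarrow> Pr n H M $$ (i,j) = (if i \<noteq> j \<and> \<not> H i j then M $$ (i,j) else 0)"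
  by (simp add: Pr_def)
lemma sg_carrier[simp]: "sg n H M \<in> carrier_mat n n" by (simp add: sg_def)
lemma sg_dim[simp]: "dim_row (sg n H M) = n" "dim_col (sg n H M) = n" by (auto simp: sg_def)
lemma sg_index: "i < n \<Longrightarrow> j < n \<Longrightarrow> sg n H M $$ (i,j) = (if i \<noteq> j \<and> \<not> H i j then (M $$ (i,j) + M $$ (j,i)) / 2 else 0)"
  by (simp add: sg_def)
lemma cm_carrier[simp]: "P \<in> carrier_mat n n \<Longrightarrow> Q \<in> carrier_mat n n \<Longrightarrow> cm P Q \<in> carrier_mat n n"
  by (simp add: cm_def)

lemma Pr_add: "M \<in> carrier_mat n n \<Longrightarrow> P \<in> carrier_mat n n \<Longrightarrow> Pr n H (M + P) = Pr n H M + Pr n H P"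
  by (intro eq_matI) (auto simp: Pr_def)
lemma Pr_minus: "M \<in> carrier_mat n n \<Longrightarrow> P \<in> carrier_mat n n \<Longrightarrow> Pr n H (M - P) = Pr n H M - Pr n H P"
  by (intro eq_matI) (auto simp: Pr_def)
lemma Pr_smult: "M \<in> carrier_mat n n \<Longrightarrow> Pr n H (c \<cdot>\<^sub>m M) = c \<cdot>\<^sub>m Pr n H M"
  by (intro eq_matI) (auto simp: Pr_def)
lemma Pr_Pr: "Pr n H (Pr n H M) = Pr n H M"
  by (intro eq_matI) (auto simp: Pr_def)
lemma Pr_transpose: "symG H \<Longrightarrow> M \<in> carrier_mat n n \<Longrightarrow> Pr n H (transpose_mat M) = transpose_mat (Pr n H M)"
  by (intro eq_matI) (auto simp: Pr_def symG_def)
lemma mn_Pr: "M \<in> carrier_mat n n \<Longrightarrow> mn (Pr n H M) \<le> mn M"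
  unfolding mn_def by (auto intro!: sum_mono simp: Pr_def)
lemma mn_Pr_diff: "M \<in> carrier_mat n n \<Longrightarrow> P \<in> carrier_mat n n \<Longrightarrow> mn (Pr n H M - Pr n H P) \<le> mn (M - P)"
  using mn_Pr[of "M - P" n H] by (simp add: Pr_minus)

lemma cm_add_r: "A \<in> carrier_mat n n \<Longrightarrow> X \<in> carrier_mat n n \<Longrightarrow> Y \<in> carrier_mat n n \<Longrightarrow>
  cm A (X + Y) = cm A X + cm A Y"
  unfolding cm_def by (intro eq_matI) (auto simp: row_col algebra_simps sum.distrib sum_subtractf)
lemma cm_add_l: "A \<in> carrier_mat n n \<Longrightarrow> X \<in> carrier_mat n n \<Longrightarrow> Y \<in> carrier_mat n n \<Longrightarrow>
  cm (X + Y) A = cm X A + cm Y A"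
  unfolding cm_def by (intro eq_matI) (auto simp: row_col algebra_simps sum.distrib sum_subtractf)
lemma cm_smult_r: "A \<in> carrier_mat n n \<Longrightarrow> X \<in> carrier_mat n n \<Longrightarrow> cm A (c \<cdot>\<^sub>m X) = c \<cdot>\<^sub>m cm A X"
  unfolding cm_def by (intro eq_matI) (auto simp: row_col algebra_simps sum_distrib_left sum_subtractf)
lemma cm_smult_l: "A \<in> carrier_mat n n \<Longrightarrow> X \<in> carrier_mat n n \<Longrightarrow> cm (c \<cdot>\<^sub>m X) A = c \<cdot>\<^sub>m cm X A"
  unfolding cm_def by (intro eq_matI) (auto simp: row_col algebra_simps sum_distrib_left sum_subtractf)
lemma cm_antisym: "P \<in> carrier_mat n n \<Longrightarrow> Q \<in> carrier_mat n n \<Longrightarrow> cm P Q = (-1) \<cdot>\<^sub>m cm Q P"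
  unfolding cm_def by (intro eq_matI) auto
lemma cm_transpose: "P \<in> carrier_mat n n \<Longrightarrow> Q \<in> carrier_mat n n \<Longrightarrow>
  transpose_mat (cm P Q) = cm (transpose_mat Q) (transpose_mat P)"
  unfolding cm_def by (simp add: transpose_minus[of _ n n] transpose_mult[of _ n n])



lemma sg_add: "X \<in> carrier_mat n n \<Longrightarrow> Y \<in> carrier_mat n n \<Longrightarrow> sg n H (X + Y) = sg n H X + sg n H Y"
  by (intro eq_matI) (auto simp: sg_def add_divide_distrib)
lemma sg_minus: "X \<in> carrier_mat n n \<Longrightarrow> Y \<in> carrier_mat n n \<Longrightarrow> sg n H (X - Y) = sg n H X - sg n H Y"
  by (intro eq_matI) (auto simp: sg_def field_simps)
lemma sg_smult: "X \<in> carrier_mat n n \<Longrightarrow> sg n H (c \<cdot>\<^sub>m X) = c \<cdot>\<^sub>m sg n H X"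
  by (intro eq_matI) (auto simp: sg_def algebra_simps)
lemma sg_sg: "symG H \<Longrightarrow> sg n H (sg n H X) = sg n H X"
  by (intro eq_matI) (auto simp: sg_def symG_def field_simps)
lemma sg_Pr: "Pr n H (sg n H X) = sg n H X"
  by (intro eq_matI) (auto simp: sg_def Pr_def)
lemma sg_T: "symG H \<Longrightarrow> transpose_mat (sg n H X) = sg n H X"
  by (intro eq_matI) (auto simp: sg_def symG_def field_simps)
lemma sg_zero: "sg n H (0\<^sub>m n n) = 0\<^sub>m n n"
  by (intro eq_matI) (auto simp: sg_def)

lemma Pr_fixD: "Pr n H W = W \<Longrightarrow> i < n \<Longrightarrow> j < n \<Longrightarrow> \<not> (i \<noteq> j \<and> \<not> H i j) \<Longrightarrow> W $$ (i,j) = 0"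
  by (metis Pr_index)

lemma T_fixD: "transpose_mat W = W \<Longrightarrow> W \<in> carrier_mat n n \<Longrightarrow> i < n \<Longrightarrow> j < n \<Longrightarrow> W $$ (j,i) = W $$ (i,j)"
  by (metis carrier_matD(1) carrier_matD(2) index_transpose_mat(1))

lemma sg_fix: "W \<in> carrier_mat n n \<Longrightarrow> Pr n H W = W \<Longrightarrow> transpose_mat W = W \<Longrightarrow> sg n H W = W"
proof (rule eq_matI)
  fix i j assume W: "W \<in> carrier_mat n n" and P: "Pr n H W = W" and T: "transpose_mat W = W"
    and ij: "i < dim_row W" "j < dim_col W"
  then have i: "i < n" and j: "j < n" by auto
  show "sg n H W $$ (i,j) = W $$ (i,j)"
    using Pr_fixD[OF P i j] T_fixD[OF T W i j] i j by (auto simp: sg_def)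
qed auto

lemma Phi_carrier[simp]: "A \<in> carrier_mat n n \<Longrightarrow> X \<in> carrier_mat n n \<Longrightarrow> Phi n H A X \<in> carrier_mat n n"
  by (simp add: Phi_def)
lemma Phi_dim[simp]: "dim_row (Phi n H A X) = n" "dim_col (Phi n H A X) = n" by (auto simp: Phi_def)
lemma Phi_add: "A \<in> carrier_mat n n \<Longrightarrow> X \<in> carrier_mat n n \<Longrightarrow> Y \<in> carrier_mat n n \<Longrightarrow>
  Phi n H A (X + Y) = Phi n H A X + Phi n H A Y"
  by (simp add: Phi_def cm_add_r cm_add_l Pr_add)
lemma Phi_smult: "A \<in> carrier_mat n n \<Longrightarrow> X \<in> carrier_mat n n \<Longrightarrow>
  Phi n H A (c \<cdot>\<^sub>m X) = c \<cdot>\<^sub>m Phi n H A X"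
  by (simp add: Phi_def cm_smult_r cm_smult_l Pr_smult)
lemma Phi_zero: "A \<in> carrier_mat n n \<Longrightarrow> Phi n H A (0\<^sub>m n n) = 0\<^sub>m n n"
proof -
  assume A: "A \<in> carrier_mat n n"
  have z: "(0::real) \<cdot>\<^sub>m 0\<^sub>m n n = 0\<^sub>m n n" by (intro eq_matI) auto
  have "Phi n H A (0\<^sub>m n n) = 0 \<cdot>\<^sub>m Phi n H A (0\<^sub>m n n)"
    using Phi_smult[OF A, of "0\<^sub>m n n" H 0] z by simp
  also have "\<dots> = 0\<^sub>m n n" using Phi_carrier[OF A, of "0\<^sub>m n n" H] by (intro eq_matI) auto
  finally show ?thesis .
qed
lemma Phi_Pr: "Pr n H (Phi n H A X) = Phi n H A X"
  by (simp add: Phi_def Pr_Pr)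
lemma smult_m1_m1: "M \<in> carrier_mat n n \<Longrightarrow> (-1::real) \<cdot>\<^sub>m ((-1) \<cdot>\<^sub>m M) = M"
  by (intro eq_matI) auto
lemma Phi_T: assumes H: "symG H" and A: "A \<in> carrier_mat n n" "transpose_mat A = A"
  and X: "X \<in> carrier_mat n n" "transpose_mat X = X"
  shows "transpose_mat (Phi n H A X) = Phi n H A X"
proof -
  let ?K = "cm A X"
  have K: "?K \<in> carrier_mat n n" using A X by simp
  have KT: "transpose_mat ?K = cm X A" using cm_transpose[OF A(1) X(1)] A X by simp
  have "transpose_mat (cm ?K A) = cm A (cm X A)" using cm_transpose[OF K A(1)] A KT by simp
  also have "\<dots> = cm A ((-1) \<cdot>\<^sub>m ?K)" using cm_antisym[OF X(1) A(1)] by simp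
  also have "\<dots> = (-1) \<cdot>\<^sub>m cm A ?K" using A K by (simp add: cm_smult_r)
  also have "\<dots> = (-1) \<cdot>\<^sub>m ((-1) \<cdot>\<^sub>m cm ?K A)" using cm_antisym[OF A(1) K] by simp
  also have "\<dots> = cm ?K A" using A K by (intro smult_m1_m1[of _ n]) simp
  finally have e: "transpose_mat (cm ?K A) = cm ?K A" .
  show ?thesis unfolding Phi_def using Pr_transpose[OF H, of "cm ?K A" n] e A K by simp
qed
lemma Phi_sg: "symG H \<Longrightarrow> A \<in> carrier_mat n n \<Longrightarrow> transpose_mat A = A \<Longrightarrow> X \<in> carrier_mat n n \<Longrightarrow>
  transpose_mat X = X \<Longrightarrow> sg n H (Phi n H A X) = Phi n H A X"
  by (intro sg_fix Phi_carrier Phi_Pr Phi_T) auto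

lemma Phi'_carrier[simp]: "A \<in> carrier_mat n n \<Longrightarrow> X \<in> carrier_mat n n \<Longrightarrow> Phi' n H A X \<in> carrier_mat n n"
  by (simp add: Phi'_def)
lemma Phi'_add: "A \<in> carrier_mat n n \<Longrightarrow> X \<in> carrier_mat n n \<Longrightarrow> Y \<in> carrier_mat n n \<Longrightarrow>
  Phi' n H A (X + Y) = Phi' n H A X + Phi' n H A Y"
  unfolding Phi'_def using Phi_carrier[of A n "sg n H X" H] Phi_carrier[of A n "sg n H Y" H]
  by (simp add: sg_add Phi_add, intro eq_matI, auto)
lemma Phi'_smult: "A \<in> carrier_mat n n \<Longrightarrow> X \<in> carrier_mat n n \<Longrightarrow>
  Phi' n H A (c \<cdot>\<^sub>m X) = c \<cdot>\<^sub>m Phi' n H A X"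
  unfolding Phi'_def using Phi_carrier[of A n "sg n H X" H]
  by (simp add: sg_smult Phi_smult, intro eq_matI, auto simp: algebra_simps)

lemma row_row: "M \<in> carrier_mat n n \<Longrightarrow> P \<in> carrier_mat n n \<Longrightarrow> i < n \<Longrightarrow> j < n \<Longrightarrow>
  row M i \<bullet> row P j = (\<Sum>k<n. M $$ (i,k) * P $$ (j,k))"
  by (auto simp: scalar_prod_def lessThan_atLeast0 intro!: sum.cong)
lemma col_col: "M \<in> carrier_mat n n \<Longrightarrow> P \<in> carrier_mat n n \<Longrightarrow> i < n \<Longrightarrow> j < n \<Longrightarrow>
  col M i \<bullet> col P j = (\<Sum>k<n. M $$ (k,i) * P $$ (k,j))"
  by (auto simp: scalar_prod_def lessThan_atLeast0 intro!: sum.cong)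

lemma ip_mult_r: "V \<in> carrier_mat n n \<Longrightarrow> K \<in> carrier_mat n n \<Longrightarrow> A \<in> carrier_mat n n \<Longrightarrow>
  ip n V (K * A) = ip n (V * transpose_mat A) K"
proof -
  assume V: "V \<in> carrier_mat n n" and K: "K \<in> carrier_mat n n" and A: "A \<in> carrier_mat n n"
  have "ip n V (K * A) = (\<Sum>i<n. \<Sum>j<n. \<Sum>k<n. V $$ (i,j) * K $$ (i,k) * A $$ (k,j))"
    using V K A by (auto simp: ip_def row_col sum_distrib_left mult.assoc intro!: sum.cong)
  also have "\<dots> = (\<Sum>i<n. \<Sum>k<n. \<Sum>j<n. V $$ (i,j) * K $$ (i,k) * A $$ (k,j))"
    by (rule sum.cong[OF refl], rule sum.swap)
  also have "\<dots> = ip n (V * transpose_mat A) K"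
    using V K A by (auto simp: ip_def row_col row_row col_col sum_distrib_right sum_distrib_left ac_simps intro!: sum.cong)
  finally show ?thesis .
qed

lemma ip_mult_l: "V \<in> carrier_mat n n \<Longrightarrow> K \<in> carrier_mat n n \<Longrightarrow> A \<in> carrier_mat n n \<Longrightarrow>
  ip n V (A * K) = ip n (transpose_mat A * V) K"
proof -
  assume V: "V \<in> carrier_mat n n" and K: "K \<in> carrier_mat n n" and A: "A \<in> carrier_mat n n"
  have "ip n V (A * K) = (\<Sum>i<n. \<Sum>j<n. \<Sum>k<n. V $$ (i,j) * A $$ (i,k) * K $$ (k,j))"
    using V K A by (auto simp: ip_def row_col sum_distrib_left mult.assoc intro!: sum.cong)
  also have "\<dots> = (\<Sum>i<n. \<Sum>k<n. \<Sum>j<n. V $$ (i,j) * A $$ (i,k) * K $$ (k,j))"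
    by (rule sum.cong[OF refl], rule sum.swap)
  also have "\<dots> = (\<Sum>k<n. \<Sum>i<n. \<Sum>j<n. V $$ (i,j) * A $$ (i,k) * K $$ (k,j))"
    by (rule sum.swap)
  also have "\<dots> = (\<Sum>k<n. \<Sum>j<n. \<Sum>i<n. V $$ (i,j) * A $$ (i,k) * K $$ (k,j))"
    by (rule sum.cong[OF refl], rule sum.swap)
  also have "\<dots> = ip n (transpose_mat A * V) K"
    using V K A by (auto simp: ip_def row_col row_row col_col sum_distrib_right sum_distrib_left ac_simps intro!: sum.cong)
  finally show ?thesis .
qed

lemma ip_minus_r: "P \<in> carrier_mat n n \<Longrightarrow> Q \<in> carrier_mat n n \<Longrightarrow> ip n V (P - Q) = ip n V P - ip n V Q"
  by (auto simp: ip_def algebra_simps sum_subtractf intro!: sum.cong)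
lemma ip_minus_l: "P \<in> carrier_mat n n \<Longrightarrow> Q \<in> carrier_mat n n \<Longrightarrow> ip n (P - Q) V = ip n P V - ip n Q V"
  by (auto simp: ip_def algebra_simps sum_subtractf intro!: sum.cong)
lemma ip_Pr: "Pr n H V = V \<Longrightarrow> ip n V (Pr n H W) = ip n V W"
  unfolding ip_def by (intro sum.cong refl) (metis Pr_fixD Pr_index lessThan_iff mult_zero_left)
lemma ip_self: "K \<in> carrier_mat n n \<Longrightarrow> ip n K K = 0 \<Longrightarrow> K = 0\<^sub>m n n"
proof (rule eq_matI)
  fix i j assume K: "K \<in> carrier_mat n n" and z: "ip n K K = 0" and ij: "i < dim_row (0\<^sub>m n n)" "j < dim_col (0\<^sub>m n n)"
  then have i: "i < n" and j: "j < n" by auto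
  have "\<forall>i\<in>{..<n}. (\<Sum>j<n. K $$ (i,j) * K $$ (i,j)) = 0"
    using z unfolding ip_def by (subst sum_nonneg_eq_0_iff[symmetric]) (auto intro!: sum_nonneg)
  then have "(\<Sum>j<n. K $$ (i,j) * K $$ (i,j)) = 0" using i by auto
  then have "\<forall>j\<in>{..<n}. K $$ (i,j) * K $$ (i,j) = 0"
    by (subst sum_nonneg_eq_0_iff[symmetric]) auto
  then show "K $$ (i,j) = 0\<^sub>m n n $$ (i,j)" using i j by auto
qed (auto)



lemma sg_Phi': assumes H: "symG H" and A: "A \<in> carrier_mat n n" "transpose_mat A = A"
  and X: "X \<in> carrier_mat n n"
  shows "sg n H (Phi' n H A X) = Phi n H A (sg n H X)"
proof -
  have PS: "sg n H (Phi n H A (sg n H X)) = Phi n H A (sg n H X)"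
    using Phi_sg[OF H A, of "sg n H X"] sg_T[OF H] by simp
  have "sg n H (Phi' n H A X) = sg n H (Phi n H A (sg n H X)) + (sg n H X - sg n H (sg n H X))"
    unfolding Phi'_def using A X by (simp add: sg_add sg_minus)
  also have "\<dots> = Phi n H A (sg n H X)" unfolding PS sg_sg[OF H]
    using A by (intro eq_matI) auto
  finally show ?thesis .
qed

lemma Phi_inj:
  assumes H: "symG H" and A: "A \<in> carrier_mat n n" "transpose_mat A = A" and ssp: "SSP_wrt n A H"
    and V: "V \<in> carrier_mat n n" "transpose_mat V = V" "Pr n H V = V" and z: "Phi n H A V = 0\<^sub>m n n"
  shows "V = 0\<^sub>m n n"
proof -
  let ?K = "cm A V"
  have K: "?K \<in> carrier_mat n n" using A V by simp
  have "ip n V (Phi n H A V) = ip n V (cm ?K A)" unfolding Phi_def using ip_Pr[OF V(3)] .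
  also have "\<dots> = ip n V (?K * A) - ip n V (A * ?K)" unfolding cm_def[of ?K A]
    using A K by (intro ip_minus_r) auto
  also have "\<dots> = ip n (V * A) ?K - ip n (A * V) ?K"
    using ip_mult_r[OF V(1) K A(1)] ip_mult_l[OF V(1) K A(1)] A(2) by simp
  also have "\<dots> = - ip n ?K ?K"
  proof -
    have "ip n (V * A) ?K - ip n (A * V) ?K = ip n (V * A - A * V) ?K"
      using A V by (intro ip_minus_l[symmetric]) auto
    also have "\<dots> = (\<Sum>i<n. \<Sum>j<n. - (?K $$ (i,j) * ?K $$ (i,j)))"
      unfolding ip_def using A V by (intro sum.cong refl) (auto simp: cm_def algebra_simps)
    also have "\<dots> = - ip n ?K ?K" by (simp add: ip_def sum_negf)
    finally show ?thesis .
  qed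
  finally have "ip n ?K ?K = 0" using z by (simp add: ip_def)
  then have K0: "?K = 0\<^sub>m n n" by (rule ip_self[OF K])
  have S: "V \<in> S_cl n (compl_graph n H)"
    unfolding S_cl_def sym_mats_def compl_graph_def using V Pr_fixD[OF V(3)] by auto
  have D: "\<forall>i<n. V $$ (i,i) = 0" using Pr_fixD[OF V(3)] by auto
  show ?thesis using ssp S D K0 unfolding SSP_wrt_def cm_def by blast
qed

lemma Phi'_inj:
  assumes H: "symG H" and A: "A \<in> carrier_mat n n" "transpose_mat A = A" and ssp: "SSP_wrt n A H"
    and X: "X \<in> carrier_mat n n" and z: "Phi' n H A X = 0\<^sub>m n n"
  shows "X = 0\<^sub>m n n"
proof -
  have "Phi n H A (sg n H X) = sg n H (0\<^sub>m n n)" using sg_Phi'[OF H A X] z by simp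
  then have "Phi n H A (sg n H X) = 0\<^sub>m n n" by (simp add: sg_zero)
  then have V0: "sg n H X = 0\<^sub>m n n"
    by (rule Phi_inj[OF H A ssp sg_carrier sg_T[OF H] sg_Pr])
  have "0\<^sub>m n n = Phi n H A (0\<^sub>m n n) + (X - 0\<^sub>m n n)" using z unfolding Phi'_def V0 by simp
  also have "\<dots> = X" using A X by (simp add: Phi_zero, intro eq_matI, auto)
  finally show ?thesis by simp
qed

lemma Psi_exists:
  assumes H: "symG H" and A: "A \<in> carrier_mat n n" "transpose_mat A = A" and ssp: "SSP_wrt n A H"
  shows "\<exists>\<Psi> c. c \<ge> 0 \<and> (\<forall>Y\<in>carrier_mat n n. \<Psi> Y \<in> carrier_mat n n \<and> Phi' n H A (\<Psi> Y) = Y)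
     \<and> (\<forall>X\<in>carrier_mat n n. \<Psi> (Phi' n H A X) = X)
     \<and> (\<forall>Y1\<in>carrier_mat n n. \<forall>Y2\<in>carrier_mat n n. \<Psi> (Y1 - Y2) = \<Psi> Y1 - \<Psi> Y2)
     \<and> (\<forall>Y\<in>carrier_mat n n. mn (\<Psi> Y) \<le> c * mn Y)"
proof (rule linear_inverse)
  fix X :: "real mat" assume "X \<in> carrier_mat n n" then show "Phi' n H A X \<in> carrier_mat n n" using A by simp
next
  fix X Y :: "real mat" assume "X \<in> carrier_mat n n" "Y \<in> carrier_mat n n"
  then show "Phi' n H A (X + Y) = Phi' n H A X + Phi' n H A Y" using A by (intro Phi'_add) auto
next
  fix c and X :: "real mat" assume "X \<in> carrier_mat n n"
  then show "Phi' n H A (c \<cdot>\<^sub>m X) = c \<cdot>\<^sub>m Phi' n H A X" using A by (intro Phi'_smult) auto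
next
  fix X :: "real mat" assume "X \<in> carrier_mat n n" "Phi' n H A X = 0\<^sub>m n n"
  then show "X = 0\<^sub>m n n" by (rule Phi'_inj[OF H A ssp])
qed

lemma Phi'_VH: assumes "symG H" "X \<in> carrier_mat n n" "Pr n H X = X" "transpose_mat X = X" "A \<in> carrier_mat n n"
  shows "Phi' n H A X = Phi n H A X"
proof -
  have "sg n H X = X" using assms by (intro sg_fix) auto
  then show ?thesis unfolding Phi'_def using assms by (intro eq_matI) auto
qed

lemma Psi_VH:
  assumes H: "symG H" and A: "A \<in> carrier_mat n n" "transpose_mat A = A"
    and P: "Y \<in> carrier_mat n n \<Longrightarrow> X \<in> carrier_mat n n \<and> Phi' n H A X = Y"
    and Y: "Y \<in> carrier_mat n n" "Pr n H Y = Y" "transpose_mat Y = Y"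
  shows "X \<in> carrier_mat n n \<and> Pr n H X = X \<and> transpose_mat X = X \<and> Phi n H A X = Y"
proof -
  have X: "X \<in> carrier_mat n n" and e: "Phi' n H A X = Y" using P Y by auto
  have sY: "sg n H Y = Y" using Y by (intro sg_fix) auto
  have e2: "Phi n H A (sg n H X) = Y" using sg_Phi'[OF H A X] e sY by simp
  have "Y + (X - sg n H X) = Y" using e unfolding Phi'_def e2 .
  then have Xs: "sg n H X = X"
  proof -
    assume a: "Y + (X - sg n H X) = Y"
    show ?thesis
    proof (rule eq_matI)
      fix i j assume "i < dim_row X" "j < dim_col X"
      then have ij: "i < n" "j < n" using X by auto
      have "(Y + (X - sg n H X)) $$ (i,j) = Y $$ (i,j)" using a by simp
      then show "sg n H X $$ (i,j) = X $$ (i,j)" using ij X Y by simp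
    qed (use X in auto)
  qed
  have "Pr n H X = X" using sg_Pr[of n H X] Xs by simp
  moreover have "transpose_mat X = X" using sg_T[OF H, of n X] Xs by simp
  ultimately show ?thesis using X e2 Xs by simp
qed



lemma mn_zero_diff: "mn (M - M) = 0"
  unfolding mn_def by simp

lemma mn_PD: assumes "P1 \<in> carrier_mat n n" "P2 \<in> carrier_mat n n" "Q1 \<in> carrier_mat n n" "Q2 \<in> carrier_mat n n"
  shows "mn (P1 * Q1 - P2 * Q2) \<le> mn (P1 - P2) * mn Q1 + mn P2 * mn (Q1 - Q2)"
proof -
  have e: "P1 * Q1 - P2 * Q2 = (P1 - P2) * Q1 + P2 * (Q1 - Q2)"
    using assms by (intro eq_matI) (auto simp: row_col algebra_simps sum.distrib sum_subtractf)
  have "mn (P1 * Q1 - P2 * Q2) \<le> mn ((P1 - P2) * Q1) + mn (P2 * (Q1 - Q2))"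
    unfolding e using assms by (intro mn_add) auto
  also have "\<dots> \<le> mn (P1 - P2) * mn Q1 + mn P2 * mn (Q1 - Q2)"
    using assms by (intro add_mono mn_mult) auto
  finally show ?thesis .
qed

lemma mn_SD: "U1 \<in> carrier_mat n n \<Longrightarrow> U2 \<in> carrier_mat n n \<Longrightarrow> V1 \<in> carrier_mat n n \<Longrightarrow> V2 \<in> carrier_mat n n \<Longrightarrow>
  mn ((U1 + V1) - (U2 + V2)) \<le> mn (U1 - U2) + mn (V1 - V2)"
  unfolding mn_def by (auto simp: sum.distrib[symmetric] intro!: sum_mono)

lemma mn_MD: "U1 \<in> carrier_mat n n \<Longrightarrow> U2 \<in> carrier_mat n n \<Longrightarrow> V1 \<in> carrier_mat n n \<Longrightarrow> V2 \<in> carrier_mat n n \<Longrightarrow>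
  mn ((U1 - V1) - (U2 - V2)) \<le> mn (U1 - U2) + mn (V1 - V2)"
  unfolding mn_def by (auto simp: sum.distrib[symmetric] intro!: sum_mono)

lemma mn_SMD: "M1 \<in> carrier_mat n n \<Longrightarrow> M2 \<in> carrier_mat n n \<Longrightarrow>
  mn (c \<cdot>\<^sub>m M1 - c \<cdot>\<^sub>m M2) = \<bar>c\<bar> * mn (M1 - M2)"
  unfolding mn_def by (auto simp: sum_distrib_left abs_mult[symmetric] algebra_simps intro!: sum.cong)

lemma mn_TD: "M1 \<in> carrier_mat n n \<Longrightarrow> M2 \<in> carrier_mat n n \<Longrightarrow>
  mn (transpose_mat M1 - transpose_mat M2) = mn (M1 - M2)"
  using mn_transpose[of "M1 - M2" n] by (simp add: transpose_minus[of _ n n])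

lemma mn_cm: "A \<in> carrier_mat n n \<Longrightarrow> W \<in> carrier_mat n n \<Longrightarrow> mn (cm A W) \<le> 2 * mn A * mn W"
proof -
  assume A: "A \<in> carrier_mat n n" and W: "W \<in> carrier_mat n n"
  have "mn (cm A W) \<le> mn (A * W) + mn (W * A)" unfolding cm_def using A W by (intro mn_minus) auto
  also have "\<dots> \<le> mn A * mn W + mn W * mn A" using A W by (intro add_mono mn_mult) auto
  finally show ?thesis by simp
qed

lemma mn_cm_diff: "A \<in> carrier_mat n n \<Longrightarrow> W1 \<in> carrier_mat n n \<Longrightarrow> W2 \<in> carrier_mat n n \<Longrightarrow>
   mn (cm A W1 - cm A W2) \<le> 2 * mn A * mn (W1 - W2)"
proof -
  assume A: "A \<in> carrier_mat n n" and W: "W1 \<in> carrier_mat n n" "W2 \<in> carrier_mat n n"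
  have "mn (cm A W1 - cm A W2) \<le> mn (A * W1 - A * W2) + mn (W1 * A - W2 * A)"
    unfolding cm_def using A W by (intro mn_MD) auto
  also have "mn (A * W1 - A * W2) \<le> mn (A - A) * mn W1 + mn A * mn (W1 - W2)"
    using A W by (intro mn_PD) auto
  also have "mn (W1 * A - W2 * A) \<le> mn (W1 - W2) * mn A + mn W2 * mn (A - A)"
    using A W by (intro mn_PD) auto
  finally show ?thesis by (simp add: mn_zero_diff)
qed

lemma transpose_smult': "transpose_mat (c \<cdot>\<^sub>m M) = c \<cdot>\<^sub>m transpose_mat (M :: real mat)"
  by (intro eq_matI) auto



lemma mn_zero0[simp]: "mn (0\<^sub>m n n) = 0" by (simp add: mn_def)

lemma construct:
  fixes n :: nat and H :: "nat \<Rightarrow> nat \<Rightarrow> bool" and A Y :: "real mat" and \<Psi> :: "real mat \<Rightarrow> real mat"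
  assumes H: "symG H" and A: "A \<in> carrier_mat n n" "transpose_mat A = A"
    and \<Psi>1: "\<forall>Y\<in>carrier_mat n n. \<Psi> Y \<in> carrier_mat n n \<and> Phi' n H A (\<Psi> Y) = Y"
    and \<Psi>2: "\<forall>Y1\<in>carrier_mat n n. \<forall>Y2\<in>carrier_mat n n. \<Psi> (Y1 - Y2) = \<Psi> Y1 - \<Psi> Y2"
    and \<Psi>3: "\<forall>Y\<in>carrier_mat n n. mn (\<Psi> Y) \<le> c * mn Y" and c: "c \<ge> 0"
    and Y: "Y \<in> carrier_mat n n" "Pr n H Y = Y" "transpose_mat Y = Y"
    and r: "0 \<le> r" "r * (16 * mn A * mn A * c + 2) \<le> 1"
    and Yr: "2 * mn A * c * mn Y \<le> r / 2"
  shows "\<exists>Z\<in>carrier_mat n n. mn Z \<le> r \<and> transpose_mat (1\<^sub>m n + Z) * (1\<^sub>m n + Z) = 1\<^sub>m n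
     \<and> Pr n H (Z * A + A * transpose_mat Z + Z * A * transpose_mat Z) = Y"
proof -
  define a where "a = mn A"
  have a0: "a \<ge> 0" by (simp add: a_def mn_nonneg)
  define S where "S Z = (-1/2::real) \<cdot>\<^sub>m (transpose_mat Z * Z)" for Z
  define R where "R Z = Pr n H (S Z * A + A * S Z) + Pr n H (Z * A * transpose_mat Z)" for Z
  define T where "T Z = cm A (\<Psi> (Y - R Z)) + S Z" for Z
  have Sc: "S Z \<in> carrier_mat n n" if "Z \<in> carrier_mat n n" for Z using that by (simp add: S_def)
  have Rc: "R Z \<in> carrier_mat n n" for Z by (simp add: R_def)
  have Psc: "\<Psi> (Y - R Z) \<in> carrier_mat n n" for Z using \<Psi>1 Y Rc by auto
  have Tc: "T Z \<in> carrier_mat n n" if "Z \<in> carrier_mat n n" for Z using Psc Sc[OF that] A by (simp add: T_def)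
  have bS: "mn (S Z) \<le> r*r/2" if Z: "Z \<in> carrier_mat n n" "mn Z \<le> r" for Z
  proof -
    have 1: "mn (S Z) = 1/2 * mn (transpose_mat Z * Z)" by (simp add: S_def mn_smult)
    have 2: "mn (transpose_mat Z * Z) \<le> mn Z * mn Z" using mn_mult[of "transpose_mat Z" n Z] Z mn_transpose[of Z n] by simp
    have 3: "mn Z * mn Z \<le> r * r" using Z r by (intro mult_mono) (auto simp: mn_nonneg)
    from 1 2 3 show ?thesis by linarith
  qed
  have bZA: "mn (Z * A) \<le> r * a" if Z: "Z \<in> carrier_mat n n" "mn Z \<le> r" for Z
  proof -
    have "mn (Z * A) \<le> mn Z * a" unfolding a_def using Z A by (intro mn_mult) auto
    also have "\<dots> \<le> r * a" using Z a0 by (intro mult_right_mono) auto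
    finally show ?thesis .
  qed
  have bR: "mn (R Z) \<le> 2 * (a * (r * r))" if Z: "Z \<in> carrier_mat n n" "mn Z \<le> r" for Z
  proof -
    have SZ: "S Z \<in> carrier_mat n n" using Sc Z by auto
    have 1: "mn (R Z) \<le> mn (Pr n H (S Z * A + A * S Z)) + mn (Pr n H (Z * A * transpose_mat Z))"
      unfolding R_def by (intro mn_add) auto
    have 2: "mn (Pr n H (S Z * A + A * S Z)) \<le> mn (S Z * A) + mn (A * S Z)"
      using mn_Pr[of "S Z * A + A * S Z" n H] mn_add[of "S Z * A" n "A * S Z"] SZ A by simp
    have 3: "mn (S Z * A) \<le> mn (S Z) * a" unfolding a_def using SZ A by (intro mn_mult) auto
    have 4: "mn (A * S Z) \<le> a * mn (S Z)" unfolding a_def using SZ A by (intro mn_mult) auto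
    have 5: "mn (S Z) * a \<le> (a * (r * r)) / 2"
    proof -
      have "mn (S Z) * a \<le> (r * r / 2) * a" using bS[OF Z] a0 by (intro mult_right_mono) auto
      then show ?thesis by (simp add: algebra_simps)
    qed
    have 9: "a * mn (S Z) \<le> (a * (r * r)) / 2" using 5 by (simp add: mult.commute)
    have 6: "mn (Pr n H (Z * A * transpose_mat Z)) \<le> mn (Z * A * transpose_mat Z)"
      using Z A by (intro mn_Pr) auto
    have 7: "mn (Z * A * transpose_mat Z) \<le> mn (Z * A) * mn Z"
      using mn_mult[of "Z * A" n "transpose_mat Z"] Z A mn_transpose[of Z n] by simp
    have 8: "mn (Z * A) * mn Z \<le> a * (r * r)"
    proof -
      have "mn (Z * A) * mn Z \<le> (r * a) * r" using bZA[OF Z] Z a0 r by (intro mult_mono) (auto simp: mn_nonneg)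
      then show ?thesis by (simp add: algebra_simps)
    qed
    from 1 2 3 4 5 9 6 7 8 show ?thesis by linarith
  qed
  have bT: "mn (T Z) \<le> r" if Z: "Z \<in> carrier_mat n n" "mn Z \<le> r" for Z
  proof -
    let ?W = "\<Psi> (Y - R Z)"
    have 1: "mn (T Z) \<le> mn (cm A ?W) + mn (S Z)" unfolding T_def using A Psc Sc Z by (intro mn_add) auto
    have 2: "mn (cm A ?W) \<le> 2 * a * mn ?W" unfolding a_def using A Psc by (intro mn_cm) auto
    have 3: "mn ?W \<le> c * mn (Y - R Z)" using \<Psi>3 Y Rc by auto
    have 4: "mn (Y - R Z) \<le> mn Y + 2 * (a * (r * r))" using mn_minus[of Y n "R Z"] Y Rc bR[OF Z] by auto
    have 5: "c * mn (Y - R Z) \<le> c * (mn Y + 2 * (a * (r * r)))" using 4 c by (intro mult_left_mono) auto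
    have 6: "2 * a * mn ?W \<le> 2 * a * (c * (mn Y + 2 * (a * (r * r))))" using 3 5 a0 by (intro mult_left_mono) auto
    have e: "2 * a * (c * (mn Y + 2 * (a * (r * r)))) + r * r / 2 = 2 * a * c * mn Y + r * (r * (16 * a * a * c + 2)) / 4"
      by (simp add: algebra_simps)
    have 7: "r * (r * (16 * a * a * c + 2)) \<le> r * 1" using r unfolding a_def by (intro mult_left_mono) auto
    have 8: "2 * a * c * mn Y \<le> r / 2" using Yr unfolding a_def .
    from 1 2 6 bS[OF Z] e 7 8 r show ?thesis by linarith
  qed
  have dT: "mn (T Z1 - T Z2) \<le> 1/2 * mn (Z1 - Z2)"
    if Z1: "Z1 \<in> carrier_mat n n" "mn Z1 \<le> r" and Z2: "Z2 \<in> carrier_mat n n" "mn Z2 \<le> r" for Z1 Z2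
  proof -
    define d where "d = mn (Z1 - Z2)"
    have d0: "d \<ge> 0" by (simp add: d_def mn_nonneg)
    have S1: "S Z1 \<in> carrier_mat n n" and S2: "S Z2 \<in> carrier_mat n n" using Sc Z1 Z2 by auto
    have dS: "mn (S Z1 - S Z2) \<le> r * d"
    proof -
      have 1: "mn (S Z1 - S Z2) = 1/2 * mn (transpose_mat Z1 * Z1 - transpose_mat Z2 * Z2)"
        unfolding S_def using Z1 Z2 by (subst mn_SMD[of _ n]) auto
      have 2: "mn (transpose_mat Z1 * Z1 - transpose_mat Z2 * Z2)
          \<le> mn (transpose_mat Z1 - transpose_mat Z2) * mn Z1 + mn (transpose_mat Z2) * mn (Z1 - Z2)"
        using Z1 Z2 by (intro mn_PD) auto
      have 3: "mn (transpose_mat Z1 - transpose_mat Z2) = d" unfolding d_def using Z1 Z2 by (intro mn_TD) auto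
      have 4: "mn (transpose_mat Z2) = mn Z2" using Z2 by (intro mn_transpose) auto
      have 5: "d * mn Z1 \<le> r * d" using mult_left_mono[OF Z1(2) d0] by (simp add: mult.commute)
      have 6: "mn Z2 * d \<le> r * d" using d0 Z2 by (intro mult_right_mono) auto
      have 7: "mn (transpose_mat Z1 * Z1 - transpose_mat Z2 * Z2) \<le> d * mn Z1 + mn Z2 * d"
        using 2 unfolding 3 4 d_def .
      from 1 7 5 6 show ?thesis by linarith
    qed
    have dZA: "mn (Z1 * A - Z2 * A) \<le> d * a"
      using mn_PD[of Z1 n Z2 A A] Z1 Z2 A by (simp add: mn_zero_diff d_def a_def)
    have dQ: "mn (Z1 * A * transpose_mat Z1 - Z2 * A * transpose_mat Z2) \<le> 2 * (a * r * d)"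
    proof -
      have 1: "mn (Z1 * A * transpose_mat Z1 - Z2 * A * transpose_mat Z2)
          \<le> mn (Z1 * A - Z2 * A) * mn (transpose_mat Z1) + mn (Z2 * A) * mn (transpose_mat Z1 - transpose_mat Z2)"
        using Z1 Z2 A by (intro mn_PD) auto
      have 2: "mn (transpose_mat Z1) = mn Z1" using Z1 by (intro mn_transpose) auto
      have 3: "mn (transpose_mat Z1 - transpose_mat Z2) = d" unfolding d_def using Z1 Z2 by (intro mn_TD) auto
      have 4: "mn (Z1 * A - Z2 * A) * mn Z1 \<le> (d * a) * r" using dZA Z1 a0 d0 r by (intro mult_mono) (auto simp: mn_nonneg)
      have 5: "mn (Z2 * A) * d \<le> (r * a) * d" using bZA[OF Z2] d0 by (intro mult_right_mono) auto
      have e: "(d * a) * r + (r * a) * d = 2 * (a * r * d)" by (simp add: algebra_simps)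
      have 6: "mn (Z1 * A * transpose_mat Z1 - Z2 * A * transpose_mat Z2)
          \<le> mn (Z1 * A - Z2 * A) * mn Z1 + mn (Z2 * A) * d" using 1 unfolding 2 3 .
      from 6 4 5 e show ?thesis by linarith
    qed
    have dSA: "mn ((S Z1 * A + A * S Z1) - (S Z2 * A + A * S Z2)) \<le> 2 * (a * r * d)"
    proof -
      have 1: "mn ((S Z1 * A + A * S Z1) - (S Z2 * A + A * S Z2)) \<le> mn (S Z1 * A - S Z2 * A) + mn (A * S Z1 - A * S Z2)"
        using S1 S2 A by (intro mn_SD) auto
      have 2: "mn (S Z1 * A - S Z2 * A) \<le> mn (S Z1 - S Z2) * a"
        using mn_PD[of "S Z1" n "S Z2" A A] S1 S2 A by (simp add: mn_zero_diff a_def)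
      have 3: "mn (A * S Z1 - A * S Z2) \<le> a * mn (S Z1 - S Z2)"
        using mn_PD[of A n A "S Z1" "S Z2"] S1 S2 A by (simp add: mn_zero_diff a_def)
      have 4: "mn (S Z1 - S Z2) * a \<le> (r * d) * a" using dS a0 by (intro mult_right_mono) auto
      have 5: "a * mn (S Z1 - S Z2) \<le> a * (r * d)" using dS a0 by (intro mult_left_mono) auto
      have e: "(r * d) * a + a * (r * d) = 2 * (a * r * d)" by (simp add: algebra_simps)
      from 1 2 3 4 5 e show ?thesis by linarith
    qed
    have dR: "mn (R Z1 - R Z2) \<le> 4 * (a * r * d)"
    proof -
      have 1: "mn (R Z1 - R Z2) \<le> mn (Pr n H (S Z1 * A + A * S Z1) - Pr n H (S Z2 * A + A * S Z2))
          + mn (Pr n H (Z1 * A * transpose_mat Z1) - Pr n H (Z2 * A * transpose_mat Z2))"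
        unfolding R_def by (intro mn_SD) auto
      have 2: "mn (Pr n H (S Z1 * A + A * S Z1) - Pr n H (S Z2 * A + A * S Z2)) \<le> mn ((S Z1 * A + A * S Z1) - (S Z2 * A + A * S Z2))"
        using S1 S2 A by (intro mn_Pr_diff) auto
      have 3: "mn (Pr n H (Z1 * A * transpose_mat Z1) - Pr n H (Z2 * A * transpose_mat Z2)) \<le> mn (Z1 * A * transpose_mat Z1 - Z2 * A * transpose_mat Z2)"
        using Z1 Z2 A by (intro mn_Pr_diff) auto
      from 1 2 3 dSA dQ show ?thesis by linarith
    qed
    have dW: "mn (\<Psi> (Y - R Z1) - \<Psi> (Y - R Z2)) \<le> c * (4 * (a * r * d))"
    proof -
      have "\<Psi> (Y - R Z1) - \<Psi> (Y - R Z2) = \<Psi> ((Y - R Z1) - (Y - R Z2))" using \<Psi>2 Y Rc by auto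
      moreover have "mn (\<Psi> ((Y - R Z1) - (Y - R Z2))) \<le> c * mn ((Y - R Z1) - (Y - R Z2))" using \<Psi>3 Y Rc by auto
      moreover have "mn ((Y - R Z1) - (Y - R Z2)) \<le> mn (Y - Y) + mn (R Z1 - R Z2)" using Y Rc by (intro mn_MD) auto
      moreover have "c * mn ((Y - R Z1) - (Y - R Z2)) \<le> c * (4 * (a * r * d))"
        using calculation(3) dR c by (intro mult_left_mono) (auto simp: mn_zero_diff)
      ultimately show ?thesis by simp
    qed
    have 1: "mn (T Z1 - T Z2) \<le> mn (cm A (\<Psi> (Y - R Z1)) - cm A (\<Psi> (Y - R Z2))) + mn (S Z1 - S Z2)"
      unfolding T_def using A Psc S1 S2 by (intro mn_SD) auto
    have 2: "mn (cm A (\<Psi> (Y - R Z1)) - cm A (\<Psi> (Y - R Z2))) \<le> 2 * a * mn (\<Psi> (Y - R Z1) - \<Psi> (Y - R Z2))"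
      unfolding a_def using A Psc by (intro mn_cm_diff) auto
    have 3: "2 * a * mn (\<Psi> (Y - R Z1) - \<Psi> (Y - R Z2)) \<le> 2 * a * (c * (4 * (a * r * d)))"
      using dW a0 by (intro mult_left_mono) auto
    have e: "2 * a * (c * (4 * (a * r * d))) + r * d = (r * (16 * a * a * c + 2)) * d / 2"
      by (simp add: algebra_simps)
    have 4: "(r * (16 * a * a * c + 2)) * d \<le> 1 * d" using r d0 unfolding a_def by (intro mult_right_mono) auto
    from 1 2 3 dS e 4 show ?thesis unfolding d_def by linarith
  qed
  obtain Z where Z: "Z \<in> carrier_mat n n" "mn Z \<le> r" "T Z = Z"
    using contraction_fix[of r n T] r(1) Tc bT dT by blast
  define S0 where "S0 = S Z"
  define X where "X = \<Psi> (Y - R Z)"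
  define K where "K = cm A X"
  have S0c: "S0 \<in> carrier_mat n n" using Sc Z by (simp add: S0_def)
  have XVH: "X \<in> carrier_mat n n \<and> Pr n H X = X \<and> transpose_mat X = X \<and> Phi n H A X = Y - R Z"
  proof (rule Psi_VH[OF H A])
    show "Y - R Z \<in> carrier_mat n n" using Y Rc by auto
    then show "X \<in> carrier_mat n n \<and> Phi' n H A X = Y - R Z" using \<Psi>1 unfolding X_def by blast
    have PR: "Pr n H (R Z) = R Z" unfolding R_def using A S0c Z
      by (simp add: Pr_add Pr_Pr)
    show "Pr n H (Y - R Z) = Y - R Z" using Y Rc PR by (simp add: Pr_minus)
    have ST: "transpose_mat (S Z) = S Z"
      unfolding S_def transpose_smult' using Z transpose_mult[of "transpose_mat Z" n n Z n] by simp
    have M1: "transpose_mat (S Z * A + A * S Z) = S Z * A + A * S Z"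
      using S0c A ST unfolding S0_def
      by (simp add: transpose_add[of _ n n] transpose_mult[of _ n n _ n], intro eq_matI, auto)
    have M2: "transpose_mat (Z * A * transpose_mat Z) = Z * A * transpose_mat Z"
      using Z A by (simp add: transpose_mult[of _ n n _ n])
    have RT: "transpose_mat (R Z) = R Z" unfolding R_def using S0c A Z M1 M2 unfolding S0_def
      by (simp add: transpose_add[of _ n n] Pr_transpose[OF H, symmetric])
    show "transpose_mat (Y - R Z) = Y - R Z" using Y Rc RT by (simp add: transpose_minus[of _ n n])
  qed
  have Xc: "X \<in> carrier_mat n n" using XVH by auto
  have Kc: "K \<in> carrier_mat n n" using Xc A by (simp add: K_def)
  have ZKS: "Z = K + S0" using Z(3) by (simp add: T_def K_def X_def S0_def)
  have KT: "transpose_mat K = (-1) \<cdot>\<^sub>m K"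
    using cm_transpose[OF A(1) Xc] XVH A cm_antisym[OF Xc A(1)] by (simp add: K_def)
  have S0T: "transpose_mat S0 = S0"
    unfolding S0_def S_def transpose_smult' using Z transpose_mult[of "transpose_mat Z" n n Z n] by simp
  have ZT: "transpose_mat Z = (-1) \<cdot>\<^sub>m K + S0"
    using Kc S0c KT S0T by (simp add: ZKS transpose_add[of _ n n])
  have S0e: "S0 = (-1/2::real) \<cdot>\<^sub>m (transpose_mat Z * Z)" by (simp add: S0_def S_def)
  have E1: "transpose_mat (1\<^sub>m n + Z) * (1\<^sub>m n + Z) = 1\<^sub>m n"
  proof -
    have "transpose_mat (1\<^sub>m n + Z) * (1\<^sub>m n + Z) = (1\<^sub>m n + transpose_mat Z) * (1\<^sub>m n + Z)"
      using Z by (simp add: transpose_add[of _ n n])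
    also have "\<dots> = (1\<^sub>m n * 1\<^sub>m n + 1\<^sub>m n * Z) + (transpose_mat Z * 1\<^sub>m n + transpose_mat Z * Z)"
      using Z by (simp add: add_mult_distrib_mat[of _ n n _ _ n] mult_add_distrib_mat[of _ n n _ n]) (intro eq_matI, auto)
    also have "\<dots> = 1\<^sub>m n"
    proof (rule eq_matI)
      fix i j assume "i < dim_row (1\<^sub>m n :: real mat)" "j < dim_col (1\<^sub>m n :: real mat)"
      then have ij: "i < n" "j < n" by auto
      have a1: "Z $$ (i,j) = K $$ (i,j) + S0 $$ (i,j)" using ij Kc S0c by (subst ZKS) simp
      have a2: "Z $$ (j,i) = - K $$ (i,j) + S0 $$ (i,j)"
      proof -
        have "transpose_mat Z $$ (i,j) = ((-1) \<cdot>\<^sub>m K + S0) $$ (i,j)" using ZT by simp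
        then show ?thesis using ij Z Kc S0c by simp
      qed
      have a3: "S0 $$ (i,j) = -1/2 * (transpose_mat Z * Z) $$ (i,j)" using ij Z by (subst S0e) simp
      show "((1\<^sub>m n * 1\<^sub>m n + 1\<^sub>m n * Z) + (transpose_mat Z * 1\<^sub>m n + transpose_mat Z * Z)) $$ (i,j) = 1\<^sub>m n $$ (i,j)"
        using ij Z a1 a2 a3 by simp
    qed (use Z in auto)
    finally show ?thesis .
  qed
  have E2: "Pr n H (Z * A + A * transpose_mat Z + Z * A * transpose_mat Z) = Y"
  proof -
    let ?Q = "Z * A * transpose_mat Z"
    have Qc: "?Q \<in> carrier_mat n n" using Z A by simp
    have za: "Z * A = K * A + S0 * A" unfolding ZKS using Kc S0c A(1) by (rule add_mult_distrib_mat)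
    have az: "A * transpose_mat Z = (-1) \<cdot>\<^sub>m (A * K) + A * S0"
      unfolding ZT using Kc S0c A by (simp add: mult_add_distrib_mat[of _ n n _ n] mult_smult_distrib[of _ n n _ n])
    have PhiX: "Pr n H (cm K A) = Y - R Z" using XVH by (simp add: Phi_def K_def)
    show ?thesis
    proof (rule eq_matI)
      fix i j assume "i < dim_row Y" "j < dim_col Y"
      then have ij: "i < n" "j < n" using Y by auto
      show "Pr n H (Z * A + A * transpose_mat Z + ?Q) $$ (i,j) = Y $$ (i,j)"
      proof (cases "i \<noteq> j \<and> \<not> H i j")
        case True
        have l: "Pr n H (Z * A + A * transpose_mat Z + ?Q) $$ (i,j) = (Z * A) $$ (i,j) + (A * transpose_mat Z) $$ (i,j) + ?Q $$ (i,j)"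
          using ij True Z A by (subst Pr_index) auto
        have e1: "(Z * A) $$ (i,j) = (K * A) $$ (i,j) + (S0 * A) $$ (i,j)"
          unfolding za using ij Kc S0c A by simp
        have e2: "(A * transpose_mat Z) $$ (i,j) = - (A * K) $$ (i,j) + (A * S0) $$ (i,j)"
          unfolding az using ij Kc S0c A by simp
        have p1: "(K * A) $$ (i,j) - (A * K) $$ (i,j) = Y $$ (i,j) - R Z $$ (i,j)"
        proof -
          have "Pr n H (cm K A) $$ (i,j) = (Y - R Z) $$ (i,j)" using PhiX by simp
          moreover have "dim_row (R Z) = n" "dim_col (R Z) = n" using Rc[of Z] by auto
          ultimately show ?thesis using ij True Kc A Y by (subst (asm) Pr_index) (auto simp: cm_def)
        qed
        have p2: "R Z $$ (i,j) = (S0 * A) $$ (i,j) + (A * S0) $$ (i,j) + ?Q $$ (i,j)"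
          unfolding R_def S0_def[symmetric] using ij True S0c A Z
          by (subst index_add_mat(1)) (auto simp: Pr_index)
        show ?thesis unfolding l e1 e2 using p1 p2 by linarith
      next
        case False
        then show ?thesis using Pr_fixD[OF Y(2) ij False] ij Z A by (subst Pr_index) auto
      qed
    qed (use Y in auto)
  qed
  show ?thesis using Z(1,2) E1 E2 by blast
qed



lemma ssp_perturb:
  assumes H: "symG H" and HH: "edge_subset H H'" and A: "A \<in> carrier_mat n n" "transpose_mat A = A"
    and \<Psi>L: "\<forall>X\<in>carrier_mat n n. \<Psi> (Phi' n H A X) = X"
    and \<Psi>3: "\<forall>Y\<in>carrier_mat n n. mn (\<Psi> Y) \<le> c * mn Y" and c: "c \<ge> 0"
    and A': "A' \<in> carrier_mat n n" and small: "4 * mn A * c * mn (A - A') < 1"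
  shows "SSP_wrt n A' H'"
  unfolding SSP_wrt_def
proof (intro allI impI)
  fix X assume asm: "X \<in> S_cl n (compl_graph n H') \<and> (\<forall>i<n. X $$ (i, i) = 0) \<and> A' * X - X * A' = 0\<^sub>m n n"
  have Xc: "X \<in> carrier_mat n n" and XT: "transpose_mat X = X"
    using asm by (auto simp: S_cl_def sym_mats_def)
  have Xoff: "\<And>i j. i < n \<Longrightarrow> j < n \<Longrightarrow> i \<noteq> j \<Longrightarrow> X $$ (i,j) \<noteq> 0 \<Longrightarrow> \<not> H' i j"
    using asm by (auto simp: S_cl_def compl_graph_def)
  have PX: "Pr n H X = X"
  proof (rule eq_matI)
    fix i j assume "i < dim_row X" "j < dim_col X"
    then have ij: "i < n" "j < n" using Xc by auto
    show "Pr n H X $$ (i,j) = X $$ (i,j)"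
    proof (cases "i \<noteq> j \<and> \<not> H i j")
      case True then show ?thesis using ij by (simp add: Pr_index)
    next
      case False
      then have "X $$ (i,j) = 0" using asm ij Xoff HH unfolding edge_subset_def by (cases "i = j") auto
      then show ?thesis using ij False by (simp add: Pr_index)
    qed
  qed (use Xc in auto)
  define a where "a = mn A"
  define d where "d = mn (A - A')"
  define x where "x = mn X"
  have a0: "a \<ge> 0" "d \<ge> 0" "x \<ge> 0" by (auto simp: a_def d_def x_def mn_nonneg)
  let ?K = "cm A X"
  have Kc: "?K \<in> carrier_mat n n" using A Xc by simp
  have comm: "(A' * X) $$ (i,j) = (X * A') $$ (i,j)" if "i < n" "j < n" for i j
  proof -
    have "(A' * X - X * A') $$ (i,j) = 0" using asm that by simp
    then show ?thesis using that A' Xc by simp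
  qed
  have Keq: "?K = (A * X - A' * X) - (X * A - X * A')"
    unfolding cm_def by (rule eq_matI) (use A Xc A' comm in auto)
  have bK: "mn ?K \<le> 2 * (d * x)"
  proof -
    have 1: "mn ?K \<le> mn (A * X - A' * X) + mn (X * A - X * A')" unfolding Keq using A Xc A' by (intro mn_minus) auto
    have 2: "mn (A * X - A' * X) \<le> d * x"
      using mn_PD[of A n A' X X] A Xc A' by (simp add: d_def x_def mn_zero_diff)
    have 3: "mn (X * A - X * A') \<le> d * x"
      using mn_PD[of X n X A A'] A Xc A' by (simp add: d_def x_def mn_zero_diff mult.commute)
    from 1 2 3 show ?thesis by linarith
  qed
  have bKA: "mn (cm ?K A) \<le> 2 * a * mn ?K"
  proof -
    have "mn (cm ?K A) \<le> mn (?K * A) + mn (A * ?K)" unfolding cm_def[of ?K A] using Kc A by (intro mn_minus) auto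
    also have "\<dots> \<le> mn ?K * a + a * mn ?K" unfolding a_def using Kc A by (intro add_mono mn_mult) auto
    finally show ?thesis by simp
  qed
  have "x = mn (\<Psi> (Phi' n H A X))" using \<Psi>L Xc by (simp add: x_def)
  also have "\<dots> = mn (\<Psi> (Phi n H A X))" using Phi'_VH[OF H Xc PX XT A(1)] by simp
  also have "\<dots> \<le> c * mn (Phi n H A X)" using \<Psi>3 A Xc by simp
  also have "\<dots> \<le> c * (2 * a * (2 * (d * x)))"
  proof (rule mult_left_mono[OF _ c])
    have "mn (Phi n H A X) \<le> mn (cm ?K A)" unfolding Phi_def using Kc A by (intro mn_Pr) auto
    also have "\<dots> \<le> 2 * a * mn ?K" by (rule bKA)
    also have "\<dots> \<le> 2 * a * (2 * (d * x))" using bK a0 by (intro mult_left_mono) auto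
    finally show "mn (Phi n H A X) \<le> 2 * a * (2 * (d * x))" .
  qed
  also have "\<dots> = (4 * a * c * d) * x" by (simp add: algebra_simps)
  finally have xle: "x \<le> (4 * a * c * d) * x" .
  have "x = 0"
  proof (rule ccontr)
    assume "x \<noteq> 0" then have "x > 0" using a0 by simp
    then have "(4 * a * c * d) * x < 1 * x" using small unfolding a_def d_def by (intro mult_strict_right_mono) auto
    then show False using xle by simp
  qed
  then show "X = 0\<^sub>m n n" using mn_zero_iff[OF Xc] by (simp add: x_def)
qed



lemma small_eventually: "b > 0 \<Longrightarrow> \<forall>\<^sub>F r in at_right (0::real). r * K < b"
proof -
  assume b: "b > 0"
  have "((\<lambda>r. r * K) \<longlongrightarrow> 0 * K) (at_right (0::real))" by (intro tendsto_intros)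
  then show ?thesis using order_tendstoD(2)[of "\<lambda>r. r * K" 0 "at_right (0::real)" b] b by simp
qed

theorem theorem3p4:
  fixes n :: nat and G H H' :: "nat \<Rightarrow> nat \<Rightarrow> bool" and A :: "real mat"
    and N :: "real mat \<Rightarrow> real"
  assumes "graph_on n G" and "graph_on n H" and "graph_on n H'"
    and "edge_subset G H" and "edge_subset H H'"
    and "A \<in> S_pattern n G"
    and "SSP_wrt n A H"
    and "matrix_norm n N"
  shows "\<forall>\<epsilon>>0. \<exists>A'. A' \<in> S_cl n H' \<and> spec A' = spec A \<and> N (A - A') < \<epsilon>
           \<and> SSP_wrt n A' H'
           \<and> (\<forall>i<n. \<forall>j<n. H' i j \<and> \<not> H i j \<longrightarrow> A' $$ (i,j) \<noteq> 0)"
proof (intro allI impI)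
  fix \<epsilon> :: real assume eps: "\<epsilon> > 0"
  have GH: "symG H" using assms(2) by (auto simp: graph_on_def symG_def)
  have GH': "symG H'" using assms(3) by (auto simp: graph_on_def symG_def)
  have A: "A \<in> carrier_mat n n" "transpose_mat A = A" using assms(6) by (auto simp: S_pattern_def sym_mats_def)
  have Azero: "A $$ (i,j) = 0" if "i < n" "j < n" "i \<noteq> j" "\<not> H i j" for i j
    using assms(6) assms(4) that by (auto simp: S_pattern_def edge_subset_def)
  obtain \<Psi> c where c: "c \<ge> 0"
    and \<Psi>1: "\<forall>Y\<in>carrier_mat n n. \<Psi> Y \<in> carrier_mat n n \<and> Phi' n H A (\<Psi> Y) = Y"
    and \<Psi>L: "\<forall>X\<in>carrier_mat n n. \<Psi> (Phi' n H A X) = X"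
    and \<Psi>2: "\<forall>Y1\<in>carrier_mat n n. \<forall>Y2\<in>carrier_mat n n. \<Psi> (Y1 - Y2) = \<Psi> Y1 - \<Psi> Y2"
    and \<Psi>3: "\<forall>Y\<in>carrier_mat n n. mn (\<Psi> Y) \<le> c * mn Y"
    using Psi_exists[OF GH A assms(7)] by blast
  obtain CN where CN: "CN \<ge> 0" "\<forall>M\<in>carrier_mat n n. N M \<le> CN * mn M"
    using seminorm_bound[of n N] assms(8) unfolding matrix_norm_def by blast
  define a where "a = mn A"
  have a0: "a \<ge> 0" by (simp add: a_def mn_nonneg)
  define J where "J = mat n n (\<lambda>(i,j). if i \<noteq> j \<and> H' i j \<and> \<not> H i j then 1 else (0::real))"
  have "\<forall>\<^sub>F r in at_right (0::real). 0 < r \<and> r * 1 < 1 \<and> r * (16 * a * a * c + 2) < 1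
      \<and> r * (3 * a * CN) < \<epsilon> \<and> r * (12 * a * a * c) < 1"
    using eventually_at_right_less[of "0::real"] small_eventually[of 1 1] small_eventually[of 1 "16 * a * a * c + 2"]
      small_eventually[OF eps, of "3 * a * CN"] small_eventually[of 1 "12 * a * a * c"]
    by (simp add: eventually_conj_iff)
  then obtain r :: real where r: "0 < r" "r * 1 < 1" "r * (16 * a * a * c + 2) < 1"
      "r * (3 * a * CN) < \<epsilon>" "r * (12 * a * a * c) < 1"
    using eventually_happens'[of "at_right (0::real)"] by auto
  have "\<forall>\<^sub>F t in at_right (0::real). 0 < t \<and> t * (2 * a * c * mn J) < r / 2"
    using eventually_at_right_less[of "0::real"] small_eventually[of "r/2" "2 * a * c * mn J"] r(1)
    by (simp add: eventually_conj_iff)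
  then obtain t :: real where t: "0 < t" "t * (2 * a * c * mn J) < r / 2"
    using eventually_happens'[of "at_right (0::real)"] by auto
  define Y where "Y = t \<cdot>\<^sub>m J"
  have Yc: "Y \<in> carrier_mat n n" by (simp add: Y_def J_def)
  have YP: "Pr n H Y = Y" unfolding Y_def J_def by (intro eq_matI) (auto simp: Pr_def)
  have YT: "transpose_mat Y = Y" unfolding Y_def J_def using GH GH' by (intro eq_matI) (auto simp: symG_def)
  have Yr: "2 * mn A * c * mn Y \<le> r / 2"
  proof -
    have "mn Y = t * mn J" using t by (simp add: Y_def mn_smult)
    then show ?thesis using t(2) by (simp add: a_def algebra_simps)
  qed
  obtain Z where Z: "Z \<in> carrier_mat n n" "mn Z \<le> r"
    and E1: "transpose_mat (1\<^sub>m n + Z) * (1\<^sub>m n + Z) = 1\<^sub>m n"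
    and E2: "Pr n H (Z * A + A * transpose_mat Z + Z * A * transpose_mat Z) = Y"
    using construct[OF GH A \<Psi>1 \<Psi>2 \<Psi>3 c Yc YP YT, of r] r Yr unfolding a_def by auto
  define Q where "Q = 1\<^sub>m n + Z"
  define A' where "A' = Q * A * transpose_mat Q"
  define D where "D = Z * A + A * transpose_mat Z + Z * A * transpose_mat Z"
  have Qc: "Q \<in> carrier_mat n n" using Z by (simp add: Q_def)
  have A'c: "A' \<in> carrier_mat n n" using Qc A by (simp add: A'_def)
  have Dc: "D \<in> carrier_mat n n" using Z A by (simp add: D_def)
  have QTQ: "transpose_mat Q * Q = 1\<^sub>m n" using E1 by (simp add: Q_def)
  have QQT: "Q * transpose_mat Q = 1\<^sub>m n"
    using mat_mult_left_right_inverse[of "transpose_mat Q" n Q] QTQ Qc by simp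
  have A'eq: "A' = A + D"
  proof -
    have 1: "Q * A = A + Z * A" unfolding Q_def using Z A
      by (simp add: add_mult_distrib_mat[of _ n n _ _ n])
    have 2: "transpose_mat Q = 1\<^sub>m n + transpose_mat Z" unfolding Q_def using Z by (simp add: transpose_add[of _ n n])
    have "A' = (A + Z * A) * (1\<^sub>m n + transpose_mat Z)" unfolding A'_def 1 2 ..
    also have "\<dots> = (A * 1\<^sub>m n + A * transpose_mat Z) + (Z * A * 1\<^sub>m n + Z * A * transpose_mat Z)"
      using Z A by (simp add: add_mult_distrib_mat[of _ n n _ _ n] mult_add_distrib_mat[of _ n n _ n]) (intro eq_matI, auto)
    also have "\<dots> = A + D" unfolding D_def using Z A by (intro eq_matI) auto
    finally show ?thesis .
  qed
  have sim: "similar_mat A' A"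
    unfolding similar_mat_def similar_mat_wit_def Let_def
    by (rule exI[of _ Q], rule exI[of _ "transpose_mat Q"]) (use A'c A Qc QQT QTQ in \<open>auto simp: A'_def\<close>)
  have spec: "spec A' = spec A" using char_poly_similar[OF sim] by (simp add: spec_def)
  have mnD: "mn D \<le> 3 * a * r"
  proof -
    have 1: "mn D \<le> mn (Z * A + A * transpose_mat Z) + mn (Z * A * transpose_mat Z)"
      unfolding D_def using Z A by (intro mn_add) auto
    have 2: "mn (Z * A + A * transpose_mat Z) \<le> mn (Z * A) + mn (A * transpose_mat Z)"
      using Z A by (intro mn_add) auto
    have 3: "mn (Z * A) \<le> mn Z * a" unfolding a_def using Z A by (intro mn_mult) auto
    have 4: "mn (A * transpose_mat Z) \<le> a * mn Z"
      using mn_mult[of A n "transpose_mat Z"] Z A mn_transpose[of Z n] by (simp add: a_def)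
    have 5: "mn (Z * A * transpose_mat Z) \<le> mn (Z * A) * mn Z"
      using mn_mult[of "Z * A" n "transpose_mat Z"] Z A mn_transpose[of Z n] by simp
    have 6: "mn Z * a \<le> r * a" using Z a0 by (intro mult_right_mono) auto
    have 7: "a * mn Z \<le> r * a" using mult_left_mono[OF Z(2) a0] by (simp add: mult.commute)
    have 8: "mn (Z * A) * mn Z \<le> (r * a) * 1" using 3 6 Z r a0 by (intro mult_mono) (auto simp: mn_nonneg)
    have 9: "mn (Z * A) * mn Z \<le> r * a" using 8 by simp
    have 10: "3 * a * r = 3 * (r * a)" by (simp add: algebra_simps)
    from 1 2 3 4 5 6 7 9 10 show ?thesis by linarith
  qed
  have mnAA': "mn (A - A') = mn D"
    unfolding A'eq mn_def using A Dc by (auto intro!: sum.cong)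
  have N: "N (A - A') < \<epsilon>"
  proof -
    have "N (A - A') \<le> CN * mn (A - A')" using CN A A'c by auto
    also have "\<dots> \<le> CN * (3 * a * r)" unfolding mnAA' using mnD CN by (intro mult_left_mono) auto
    also have "\<dots> = r * (3 * a * CN)" by (simp add: algebra_simps)
    also have "\<dots> < \<epsilon>" by (rule r(4))
    finally show ?thesis .
  qed
  have small: "4 * mn A * c * mn (A - A') < 1"
  proof -
    have "4 * a * c * mn (A - A') \<le> 4 * a * c * (3 * a * r)" unfolding mnAA'
      using mnD a0 c by (intro mult_left_mono) auto
    also have "\<dots> = r * (12 * a * a * c)" by (simp add: algebra_simps)
    finally have "4 * a * c * mn (A - A') < 1" using r(5) by linarith
    then show ?thesis by (simp only: a_def)
  qed
  have ssp: "SSP_wrt n A' H'" by (rule ssp_perturb[OF GH assms(5) A \<Psi>L \<Psi>3 c A'c small])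
  have PA: "Pr n H A = 0\<^sub>m n n" by (intro eq_matI) (auto simp: Pr_def Azero)
  have PA': "Pr n H A' = Y" unfolding A'eq using A Dc PA E2 Yc by (simp add: Pr_add D_def)
  have A'ent: "A' $$ (i,j) = Y $$ (i,j)" if "i < n" "j < n" "i \<noteq> j" "\<not> H i j" for i j
  proof -
    have "Pr n H A' $$ (i,j) = Y $$ (i,j)" using PA' by simp
    then show ?thesis using that by (simp add: Pr_index)
  qed
  have A'T: "transpose_mat A' = A'"
  proof -
    have "transpose_mat A' = transpose_mat (transpose_mat Q) * transpose_mat (Q * A)"
      unfolding A'_def using Qc A by (intro transpose_mult) auto
    also have "transpose_mat (Q * A) = transpose_mat A * transpose_mat Q"
      using Qc A by (intro transpose_mult) auto
    finally show ?thesis unfolding A'_def using A Qc by simp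
  qed
  have Scl: "A' \<in> S_cl n H'"
    unfolding S_cl_def sym_mats_def
  proof (intro CollectI conjI allI impI A'c A'T)
    fix i j assume ij: "i < n" "j < n" "i \<noteq> j" "A' $$ (i,j) \<noteq> 0"
    show "H' i j"
    proof (rule ccontr)
      assume nH': "\<not> H' i j"
      then have "\<not> H i j" using assms(5) by (auto simp: edge_subset_def)
      then have "A' $$ (i,j) = Y $$ (i,j)" using A'ent ij by auto
      also have "\<dots> = 0" using ij nH' by (simp add: Y_def J_def)
      finally show False using ij by simp
    qed
  qed
  have nz: "\<forall>i<n. \<forall>j<n. H' i j \<and> \<not> H i j \<longrightarrow> A' $$ (i,j) \<noteq> 0"
  proof (intro allI impI)
    fix i j assume ij: "i < n" "j < n" "H' i j \<and> \<not> H i j"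
    then have ne: "i \<noteq> j" using assms(3) by (auto simp: graph_on_def)
    then have "A' $$ (i,j) = Y $$ (i,j)" using A'ent ij by auto
    also have "\<dots> = t" using ij ne by (simp add: Y_def J_def)
    finally show "A' $$ (i,j) \<noteq> 0" using t by simp
  qed
  show "\<exists>A'. A' \<in> S_cl n H' \<and> spec A' = spec A \<and> N (A - A') < \<epsilon> \<and> SSP_wrt n A' H'
           \<and> (\<forall>i<n. \<forall>j<n. H' i j \<and> \<not> H i j \<longrightarrow> A' $$ (i,j) \<noteq> 0)"
    using Scl spec N ssp nz by blast
qed



end
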